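(* Let $E_8$, $\alpha_0,\dots,\alpha_8$, $n_i$, $L=L(i)$ and $\xi$ be as in the context. Write $L=R_1\oplus\cdots\oplus R_l$ with $R_k$ indecomposable root lattices with root systems $\Phi_k$, let $s^k=s(\Phi_k)\in V_{\sqrt2R_k}\subset V_{\sqrt2L}\subset V_{\sqrt2E_8}$, and let \[U=\{v\in V_{\sqrt2E_8} : (s^k)_1v=0\text{ for all }k=1,\dots,l\}.\] For $j=1,\dots,n_i-1$ let $H_j=\{\alpha\in j\alpha_i+L:\langle\alpha,\alpha\rangle=2\}$ and $X^j=\sum_{\alpha\in H_j}e^{\sqrt2\alpha}$. Let $\hat e=\frac1{16}\omega+\frac1{32}\sum_{\alpha\in\Phi(E_8)}e^{\sqrt2\alpha}$ and $\hat f=\sigma\hat e$. Then (1) $X^j\in U$ for $j=1,\dots,n_i-1$; (2) $\hat e,\hat f\in U$.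
   Context: $E_8$ is the root lattice of type $E_8$ with simple roots $\alpha_1,\dots,\alpha_8$: $\langle\alpha_j,\alpha_j\rangle=2$, $\langle\alpha_j,\alpha_{j+1}\rangle=-1$ for $1\le j\le6$, $\langle\alpha_5,\alpha_8\rangle=-1$, all other pairs orthogonal. Set $\alpha_0=-(2\alpha_1+3\alpha_2+4\alpha_3+5\alpha_4+6\alpha_5+4\alpha_6+2\alpha_7+3\alpha_8)$ (minus the highest root; it is a root with $\langle\alpha_0,\alpha_1\rangle=-1$, orthogonal to $\alpha_2,\dots,\alpha_8$), so $\alpha_0,\dots,\alpha_8$ form the extended $E_8$ diagram. Let $(n_0,\dots,n_8)=(1,2,3,4,5,6,4,2,3)$. Fix $i\in\{0,\dots,8\}$ and let $L=L(i)$ be the sublattice generated by $\{\alpha_j:0\le j\le8,\ j\ne i\}$; then $|E_8/L|=n_i$ and $E_8=\bigcup_{j=0}^{n_i-1}(j\alpha_i+L)$. $\Phi(E_8)$ is the set of $240$ roots of $E_8$. $V_{\sqrt2E_8}=M(1)\otimes\mathbb{C}[\sqrt2E_8]$ is the standard lattice vertex operator algebra (ordinary group algebra, since $\sqrt2E_8$ is doubly even) with Virasoro element $\omega$; $V_{\sqrt2L}$ is its subalgebra $M(1)\otimes\mathbb{C}[\sqrt2L]$, and $V_{\sqrt2L}\cong V_{\sqrt2R_1}\otimes\cdots\otimes V_{\sqrt2R_l}$. For an indecomposable root lattice $R$ of type $A,D,E$ with root system $\Phi_R$, positive roots $\Phi_R^+$ and Coxeter number $h$, $s(\Phi_R)=\frac1{2(h+2)}\sum_{\alpha\in\Phi_R^+}(\alpha(-1)^2\cdot1-2(e^{\sqrt2\alpha}+e^{-\sqrt2\alpha}))\in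 V_{\sqrt2R}$. The automorphism $\sigma$ of $V_{\sqrt2E_8}$ acts on $M(1)\otimes e^{\sqrt2\gamma}$ for $\gamma\in j\alpha_i+L$ as multiplication by $\xi^j$, where $\xi=e^{2\pi\sqrt{-1}/n_i}$. Component operators: $Y(v,z)=\sum_nv_nz^{-n-1}$. *)

theory Defs
  imports Complex_Main "HOL-Library.Multiset" "HOL-Library.Product_Lexorder"
begin

section \<open>The lattice E8 in coordinates w.r.t. alpha_1..alpha_8\<close>

type_synonym lat = "nat \<Rightarrow> int"   (* coordinates, indices 1..8, zero elsewhere *)

definition E8 :: "lat set" where
  "E8 = {x. \<forall>k. k \<notin> {1..8} \<longrightarrow> x k = 0}"

definition gram :: "nat \<Rightarrow> nat \<Rightarrow> int" where
  "gram a b = (if a \<in> {1..8} \<and> b \<in> {1..8} then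
      (if a = b then 2
       else if (a + 1 = b \<and> a \<le> 6) \<or> (b + 1 = a \<and> b \<le> 6) \<or> {a, b} = {5, 8} then -1
       else 0)
    else 0)"

definition ip :: "lat \<Rightarrow> lat \<Rightarrow> int" where
  "ip x y = (\<Sum>a=1..8. \<Sum>b=1..8. x a * gram a b * y b)"

definition neg :: "lat \<Rightarrow> lat" where "neg x = (\<lambda>k. - x k)"

(* coefficients of the highest root *)
definition hr :: "nat \<Rightarrow> int" where
  "hr k = (if k \<in> {1..8} then [2,3,4,5,6,4,2,3] ! (k - 1) else 0)"

(* simple roots alpha_1..alpha_8 and alpha_0 = - highest root *)
definition sr :: "nat \<Rightarrow> lat" where
  "sr j = (if j = 0 then (\<lambda>k. - hr k) else (\<lambda>k. if k = j then 1 else 0))"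

definition nn :: "nat \<Rightarrow> nat" where
  "nn i = [1,2,3,4,5,6,4,2,3] ! i"

definition lcomb :: "(nat \<Rightarrow> int) \<Rightarrow> nat set \<Rightarrow> lat" where
  "lcomb c S = (\<lambda>k. \<Sum>j\<in>S. c j * sr j k)"

definition Lsub :: "nat \<Rightarrow> lat set" where
  "Lsub i = {lcomb c ({0..8} - {i}) | c. True}"

definition PhiE8 :: "lat set" where
  "PhiE8 = {x \<in> E8. ip x x = 2}"

section \<open>Decomposition of L(i) into indecomposable root lattices\<close>

definition Dnodes :: "nat \<Rightarrow> nat set" where "Dnodes i = {0..8} - {i}"

definition adj :: "nat \<Rightarrow> (nat \<times> nat) set" where
  "adj i = {(a, b). a \<in> Dnodes i \<and> b \<in> Dnodes i \<and> a \<noteq> b \<and> ip (sr a) (sr b) \<noteq> 0}"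

(* connected components of the Dynkin diagram of L(i): the simple roots of R_1,...,R_l *)
definition comps :: "nat \<Rightarrow> nat set set" where
  "comps i = {{b \<in> Dnodes i. (a, b) \<in> (adj i)\<^sup>*} | a. a \<in> Dnodes i}"

definition Rlat :: "nat set \<Rightarrow> lat set" where
  "Rlat C = {lcomb c C | c. True}"

definition PhiR :: "nat set \<Rightarrow> lat set" where
  "PhiR C = {x \<in> Rlat C. ip x x = 2}"

definition PhiPos :: "nat set \<Rightarrow> lat set" where
  "PhiPos C = {x \<in> PhiR C. \<exists>c. (\<forall>j\<in>C. c j \<ge> 0) \<and> x = lcomb c C}"

definition refl :: "lat \<Rightarrow> lat \<Rightarrow> lat" where
  "refl a x = (\<lambda>k. x k - ip x a * a k)"

definition cox :: "nat set \<Rightarrow> lat \<Rightarrow> lat" where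
  "cox C = foldr (\<lambda>j f. refl (sr j) \<circ> f) (sorted_list_of_set C) id"

definition coxnum :: "nat set \<Rightarrow> nat" where
  "coxnum C = (LEAST m. m > 0 \<and> (\<forall>x\<in>E8. (cox C ^^ m) x = x))"

section \<open>The lattice VOA V_{sqrt2 E8} = M(1) (x) C[sqrt2 E8]\<close>

(* basis vector (M, g) = prod_{(a,n) in M} alpha_a(-n) (x) e^{sqrt2 g} *)
type_synonym bas = "(nat \<times> nat) multiset \<times> lat"
type_synonym vvec = "bas \<Rightarrow> complex"

definition validbas :: "bas set" where
  "validbas = {(M, g). (\<forall>p\<in>#M. fst p \<in> {1..8} \<and> snd p \<ge> 1) \<and> g \<in> E8}"

definition supp :: "vvec \<Rightarrow> bas set" where "supp v = {b. v b \<noteq> 0}"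

definition VE8 :: "vvec set" where
  "VE8 = {v. finite (supp v) \<and> supp v \<subseteq> validbas}"

definition bvec :: "bas \<Rightarrow> vvec" where
  "bvec b = (\<lambda>b'. if b' = b then 1 else 0)"

definition extend :: "(bas \<Rightarrow> vvec) \<Rightarrow> vvec \<Rightarrow> vvec" where
  "extend T v = (\<lambda>b'. \<Sum>b\<in>supp v. v b * T b b')"

(* Heisenberg operator alpha_a(m) on basis vectors; h = C (x) sqrt2 E8 with the form of E8 *)
definition heis_b :: "nat \<Rightarrow> int \<Rightarrow> bas \<Rightarrow> vvec" where
  "heis_b a m b = (case b of (M, g) \<Rightarrow>
     if m < 0 then bvec (M + {#(a, nat (- m))#}, g)
     else if m = 0 then (\<lambda>b'. complex_of_real (sqrt 2) * of_int (ip (sr a) g) * bvec (M, g) b')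
     else (\<lambda>b'. \<Sum>p\<in>set_mset M. if snd p = nat m
            then of_int m * of_int (ip (sr a) (sr (fst p))) * of_nat (count M p) * bvec (M - {#p#}, g) b'
            else 0))"

definition heis :: "nat \<Rightarrow> int \<Rightarrow> vvec \<Rightarrow> vvec" where
  "heis a m = extend (heis_b a m)"

(* x(m) for x = sum_a c a * alpha_a in h *)
definition hmode :: "(nat \<Rightarrow> complex) \<Rightarrow> int \<Rightarrow> vvec \<Rightarrow> vvec" where
  "hmode c m v = (\<lambda>b. \<Sum>a=1..8. c a * heis a m v b)"

(* coefficient of z^p in E^-(-x,z) = exp(sum_{r>0} x(-r)/r z^r) *)
definition Eminus :: "(nat \<Rightarrow> complex) \<Rightarrow> nat \<Rightarrow> vvec \<Rightarrow> vvec" where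
  "Eminus c p v = (\<lambda>b. \<Sum>rs\<in>{rs. set rs \<subseteq> {1..p} \<and> sum_list rs = p}.
      (1 / fact (length rs)) * prod_list (map (\<lambda>r. 1 / of_nat r) rs)
      * foldr (\<lambda>r f. hmode c (- int r) \<circ> f) rs id v b)"

(* coefficient of z^(-q) in E^+(-x,z) = exp(- sum_{r>0} x(r)/r z^(-r)) *)
definition Eplus :: "(nat \<Rightarrow> complex) \<Rightarrow> nat \<Rightarrow> vvec \<Rightarrow> vvec" where
  "Eplus c q v = (\<lambda>b. \<Sum>rs\<in>{rs. set rs \<subseteq> {1..q} \<and> sum_list rs = q}.
      (1 / fact (length rs)) * prod_list (map (\<lambda>r. - 1 / of_nat r) rs)
      * foldr (\<lambda>r f. hmode c (int r) \<circ> f) rs id v b)"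

(* e^{sqrt2 beta} acting on the group algebra part (no cocycle) *)
definition shift :: "lat \<Rightarrow> vvec \<Rightarrow> vvec" where
  "shift \<beta> v = (\<lambda>(M, g). v (M, (\<lambda>k. g k - \<beta> k)))"

definition deg :: "(nat \<times> nat) multiset \<Rightarrow> nat" where
  "deg M = (\<Sum>p\<in>#M. snd p)"

definition hprod :: "((nat \<times> nat) list) \<Rightarrow> int list \<Rightarrow> nat list \<Rightarrow> vvec \<Rightarrow> vvec" where
  "hprod xs ms js = foldr (\<lambda>j f. heis (fst (xs ! j)) (ms ! j) \<circ> f) js id"

(* Component (v_bv)_N applied to basis vector bw, where
   Y(prod_j alpha_{a_j}(-n_j) e^{sqrt2 beta}, z)
     = : prod_j (1/(n_j-1)!) d^{n_j-1} alpha_{a_j}(z)  E^-(-sqrt2 beta,z) E^+(-sqrt2 beta,z) e^{sqrt2 beta} z^{sqrt2 beta} :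
   The summation box is large enough to contain every nonzero contribution. *)
definition Ybas :: "bas \<Rightarrow> int \<Rightarrow> bas \<Rightarrow> vvec" where
  "Ybas bv N bw = (case bv of (Mv, \<beta>) \<Rightarrow> case bw of (Mw, \<gamma>) \<Rightarrow>
     let xs = sorted_list_of_multiset Mv; k = length xs; c = 2 * ip \<beta> \<gamma>;
         B = nat (\<bar>N\<bar> + 1 + \<bar>c\<bar> + 2 * int (deg Mw) + int (deg Mv));
         sb = (\<lambda>a. complex_of_real (sqrt 2) * of_int (\<beta> a))
     in (\<lambda>b. \<Sum>(ms, p, q)\<in>{(ms, p, q). length ms = k \<and> set ms \<subseteq> {- int B..int B} \<and> p \<le> B \<and> q \<le> B
                \<and> (\<Sum>j<k. - (ms ! j) - int (snd (xs ! j))) + int p - int q + c = - N - 1}.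
          (\<Prod>j<k. (of_int (- (ms ! j) - 1) :: complex) gchoose (snd (xs ! j) - 1))
          * (hprod xs ms (filter (\<lambda>j. ms ! j < 0) [0..<k])
               (Eminus sb p (Eplus sb q (shift \<beta>
                 (hprod xs ms (filter (\<lambda>j. ms ! j \<ge> 0) [0..<k]) (bvec (Mw, \<gamma>)))))) b)))"

(* v_N w, bilinear in v and w *)
definition Ymode :: "vvec \<Rightarrow> int \<Rightarrow> vvec \<Rightarrow> vvec" where
  "Ymode v N w = (\<lambda>b. \<Sum>bv\<in>supp v. \<Sum>bw\<in>supp w. v bv * w bw * Ybas bv N bw b)"

definition cartan_inv :: "nat \<Rightarrow> nat \<Rightarrow> complex" where
  "cartan_inv = (THE X. (\<forall>a\<in>{1..8}. \<forall>b\<in>{1..8}.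
        (\<Sum>c=1..8. of_int (gram a c) * X c b) = (if a = b then 1 else 0))
      \<and> (\<forall>a b. a \<notin> {1..8} \<or> b \<notin> {1..8} \<longrightarrow> X a b = 0))"

definition vac_lat :: lat where "vac_lat = (\<lambda>_. 0)"

definition omega :: vvec where
  "omega = (\<lambda>bb. (1/2) * (\<Sum>a=1..8. \<Sum>b=1..8. cartan_inv a b * bvec ({#(a,1), (b,1)#}, vac_lat) bb))"

(* x(-1)^2 . 1 *)
definition hh :: "lat \<Rightarrow> vvec" where
  "hh x = (\<lambda>bb. \<Sum>a=1..8. \<Sum>b=1..8. of_int (x a * x b) * bvec ({#(a,1), (b,1)#}, vac_lat) bb)"

definition ee :: "lat \<Rightarrow> vvec" where "ee x = bvec ({#}, x)"

definition svec :: "nat set \<Rightarrow> vvec" where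
  "svec C = (\<lambda>bb. (1 / (2 * (of_nat (coxnum C) + 2))) *
      (\<Sum>x\<in>PhiPos C. hh x bb - 2 * (ee x bb + ee (neg x) bb)))"

definition Uspace :: "nat \<Rightarrow> vvec set" where
  "Uspace i = {v \<in> VE8. \<forall>C\<in>comps i. Ymode (svec C) 1 v = (\<lambda>_. 0)}"

definition xi :: "nat \<Rightarrow> complex" where
  "xi i = cis (2 * pi / real (nn i))"

definition coset_idx :: "nat \<Rightarrow> lat \<Rightarrow> nat" where
  "coset_idx i g = (THE j. j < nn i \<and> (\<lambda>k. g k - int j * sr i k) \<in> Lsub i)"

definition sigma :: "nat \<Rightarrow> vvec \<Rightarrow> vvec" where
  "sigma i v = (\<lambda>b. xi i ^ coset_idx i (snd b) * v b)"

definition Hset :: "nat \<Rightarrow> nat \<Rightarrow> lat set" where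
  "Hset i j = {x. (\<lambda>k. x k - int j * sr i k) \<in> Lsub i \<and> ip x x = 2}"

definition Xvec :: "nat \<Rightarrow> nat \<Rightarrow> vvec" where
  "Xvec i j = (\<lambda>bb. \<Sum>x\<in>Hset i j. ee x bb)"

definition ehat :: vvec where
  "ehat = (\<lambda>bb. omega bb / 16 + (\<Sum>x\<in>PhiE8. ee x bb) / 32)"

end

theory Submission
  imports Defs
begin


lemma upto8: "{1..8::nat} = {1,2,3,4,5,6,7,8}" by auto

lemma sum8: "(\<Sum>a\<in>{1..8::nat}. f a) = f 1 + f 2 + f 3 + f 4 + f 5 + f 6 + f 7 + (f 8 :: 'a::comm_monoid_add)"
  unfolding upto8 by (simp add: add.assoc)

lemma gram_alt: "gram a b = (if a \<in> {1..8} \<and> b \<in> {1..8} then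
      (if a = b then 2
       else if (a + 1 = b \<and> a \<le> 6) \<or> (b + 1 = a \<and> b \<le> 6) \<or> (a = 5 \<and> b = 8) \<or> (a = 8 \<and> b = 5) then -1
       else 0)
    else 0)"
  unfolding gram_def doubleton_eq_iff by simp

lemma gram_row: "gram 1 b = (if b = 1 then 2 else if b = 2 then -1 else 0)"
  "gram 2 b = (if b = 2 then 2 else if b = 1 \<or> b = 3 then -1 else 0)"
  "gram 3 b = (if b = 3 then 2 else if b = 2 \<or> b = 4 then -1 else 0)"
  "gram 4 b = (if b = 4 then 2 else if b = 3 \<or> b = 5 then -1 else 0)"
  "gram 5 b = (if b = 5 then 2 else if b = 4 \<or> b = 6 \<or> b = 8 then -1 else 0)"
  "gram 6 b = (if b = 6 then 2 else if b = 5 \<or> b = 7 then -1 else 0)"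
  "gram 7 b = (if b = 7 then 2 else if b = 6 then -1 else 0)"
  "gram 8 b = (if b = 8 then 2 else if b = 5 then -1 else 0)"
  by (auto simp: gram_alt)

lemma ip_explicit: "ip x y =
   2*x 1*y 1 + 2*x 2*y 2 + 2*x 3*y 3 + 2*x 4*y 4 + 2*x 5*y 5 + 2*x 6*y 6 + 2*x 7*y 7 + 2*x 8*y 8
  - x 1*y 2 - x 2*y 1 - x 2*y 3 - x 3*y 2 - x 3*y 4 - x 4*y 3 - x 4*y 5 - x 5*y 4
  - x 5*y 6 - x 6*y 5 - x 6*y 7 - x 7*y 6 - x 5*y 8 - x 8*y 5"
  unfolding ip_def sum8 gram_row by (simp add: algebra_simps)

lemma ip_sos: "4 * ip y y = (-2*y 6 + y 7 + 2*y 8)^2 + (-2*y 5 + 2*y 6 - y 7 + 2*y 8)^2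
  + (-2*y 4 + 2*y 5 - y 7)^2 + (-2*y 3 + 2*y 4 - y 7)^2 + (-2*y 2 + 2*y 3 - y 7)^2
  + (-2*y 1 + 2*y 2 - y 7)^2 + (2*y 1 - y 7)^2 + (y 7)^2"
  unfolding ip_explicit by (simp add: power2_eq_square algebra_simps)


lemma sq_le8: fixes s :: int assumes "s^2 \<le> 8" shows "-2 \<le> s \<and> s \<le> 2"
proof (rule ccontr)
  assume "\<not> (-2 \<le> s \<and> s \<le> 2)"
  then have "3 \<le> \<bar>s\<bar>" by auto
  then have "3 * 3 \<le> \<bar>s\<bar> * \<bar>s\<bar>" using mult_mono[of 3 "\<bar>s\<bar>" 3 "\<bar>s\<bar>"] by simp
  then have "9 \<le> s^2" by (simp add: power2_eq_square)
  then show False using assms by simp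
qed

lemma E8_iff: "x \<in> E8 \<longleftrightarrow> (\<forall>k. k \<notin> {1..8} \<longrightarrow> x k = 0)" by (simp add: E8_def)

lemma ip_nonneg: "ip y y \<ge> 0"
proof -
  have "4 * ip y y \<ge> 0" unfolding ip_sos by (intro add_nonneg_nonneg) auto
  then show ?thesis by simp
qed

lemma ip_zero: assumes "x \<in> E8" "ip x x = 0" shows "x = (\<lambda>_. 0)"
proof -
  have z: "(-2*x 6 + x 7 + 2*x 8)^2 + (-2*x 5 + 2*x 6 - x 7 + 2*x 8)^2
  + (-2*x 4 + 2*x 5 - x 7)^2 + (-2*x 3 + 2*x 4 - x 7)^2 + (-2*x 2 + 2*x 3 - x 7)^2
  + (-2*x 1 + 2*x 2 - x 7)^2 + (2*x 1 - x 7)^2 + (x 7)^2 = 0"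
    using ip_sos[of x] assms(2) by simp
  have "(-2*x 6 + x 7 + 2*x 8) = 0 \<and> (-2*x 5 + 2*x 6 - x 7 + 2*x 8) = 0
    \<and> (-2*x 4 + 2*x 5 - x 7) = 0 \<and> (-2*x 3 + 2*x 4 - x 7) = 0 \<and> (-2*x 2 + 2*x 3 - x 7) = 0
    \<and> (-2*x 1 + 2*x 2 - x 7) = 0 \<and> (2*x 1 - x 7) = 0 \<and> x 7 = 0"
    using z by (simp add: add_nonneg_eq_0_iff)
  then have c: "x 1 = 0 \<and> x 2 = 0 \<and> x 3 = 0 \<and> x 4 = 0 \<and> x 5 = 0 \<and> x 6 = 0 \<and> x 7 = 0 \<and> x 8 = 0"
    by linarith
  show ?thesis
  proof
    fix k
    show "x k = 0"
    proof (cases "k \<in> {1..8}")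
      case True
      then have "k = 1 \<or> k = 2 \<or> k = 3 \<or> k = 4 \<or> k = 5 \<or> k = 6 \<or> k = 7 \<or> k = 8" by auto
      then show ?thesis using c by auto
    next
      case False
      then show ?thesis using assms(1) by (simp add: E8_iff)
    qed
  qed
qed

lemma ip_addL: "ip (\<lambda>k. x k + y k) z = ip x z + ip y z" by (simp add: ip_explicit algebra_simps)
lemma ip_addR: "ip z (\<lambda>k. x k + y k) = ip z x + ip z y" by (simp add: ip_explicit algebra_simps)
lemma ip_subL: "ip (\<lambda>k. x k - y k) z = ip x z - ip y z" by (simp add: ip_explicit algebra_simps)
lemma ip_subR: "ip z (\<lambda>k. x k - y k) = ip z x - ip z y" by (simp add: ip_explicit algebra_simps)
lemma ip_sym: "ip x y = ip y x" by (simp add: ip_explicit algebra_simps)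
lemma ip_negL: "ip (neg x) y = - ip x y" by (simp add: ip_explicit neg_def algebra_simps)
lemma ip_negR: "ip y (neg x) = - ip y x" by (simp add: ip_explicit neg_def algebra_simps)

lemma E8_add: "x \<in> E8 \<Longrightarrow> y \<in> E8 \<Longrightarrow> (\<lambda>k. x k + y k) \<in> E8" by (simp add: E8_iff)
lemma E8_sub: "x \<in> E8 \<Longrightarrow> y \<in> E8 \<Longrightarrow> (\<lambda>k. x k - y k) \<in> E8" by (simp add: E8_iff)
lemma E8_neg: "x \<in> E8 \<Longrightarrow> neg x \<in> E8" by (simp add: E8_iff neg_def)

lemma root_ip_bounds:
  assumes x: "x \<in> PhiE8" and y: "y \<in> PhiE8"
  shows "-2 \<le> ip x y" "ip x y \<le> 2" "ip x y = 2 \<Longrightarrow> y = x" "ip x y = -2 \<Longrightarrow> y = neg x"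
proof -
  have xe: "x \<in> E8" "ip x x = 2" and ye: "y \<in> E8" "ip y y = 2" using x y by (auto simp: PhiE8_def)
  define d where "d = (\<lambda>k. x k - y k)"
  define s where "s = (\<lambda>k. x k + y k)"
  have dd: "ip d d = 4 - 2 * ip x y" unfolding d_def using xe ye
    by (simp add: ip_subL ip_subR ip_sym[of y x])
  have ss: "ip s s = 4 + 2 * ip x y" unfolding s_def using xe ye
    by (simp add: ip_addL ip_addR ip_sym[of y x])
  show "-2 \<le> ip x y" using ip_nonneg[of s] ss by simp
  show "ip x y \<le> 2" using ip_nonneg[of d] dd by simp
  show "ip x y = 2 \<Longrightarrow> y = x"
  proof -
    assume "ip x y = 2"
    then have "d = (\<lambda>_. 0)" using ip_zero[of d] dd xe ye unfolding d_def by (simp add: E8_sub)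
    then show "y = x" unfolding d_def by (metis eq_iff_diff_eq_0 ext)
  qed
  show "ip x y = -2 \<Longrightarrow> y = neg x"
  proof -
    assume "ip x y = -2"
    then have "s = (\<lambda>_. 0)" using ip_zero[of s] ss xe ye unfolding s_def by (simp add: E8_add)
    then show "y = neg x" unfolding s_def neg_def by (metis add_eq_0_iff ext)
  qed
qed

lemma PhiE8_bound: assumes "y \<in> PhiE8" "k \<in> {1..8}" shows "y k \<in> {-10..10}"
proof -
  have "ip y y = 2" using assms by (simp add: PhiE8_def)
  then have S: "(-2*y 6 + y 7 + 2*y 8)^2 + (-2*y 5 + 2*y 6 - y 7 + 2*y 8)^2
  + (-2*y 4 + 2*y 5 - y 7)^2 + (-2*y 3 + 2*y 4 - y 7)^2 + (-2*y 2 + 2*y 3 - y 7)^2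
  + (-2*y 1 + 2*y 2 - y 7)^2 + (2*y 1 - y 7)^2 + (y 7)^2 = 8" using ip_sos[of y] by simp
  have nn: "\<And>t::int. t^2 \<ge> 0" by simp
  have b1: "-2 \<le> (-2*y 6 + y 7 + 2*y 8) \<and> (-2*y 6 + y 7 + 2*y 8) \<le> 2"
    by (rule sq_le8) (use S nn in smt)
  have b2: "-2 \<le> (-2*y 5 + 2*y 6 - y 7 + 2*y 8) \<and> (-2*y 5 + 2*y 6 - y 7 + 2*y 8) \<le> 2"
    by (rule sq_le8) (use S nn in smt)
  have b3: "-2 \<le> (-2*y 4 + 2*y 5 - y 7) \<and> (-2*y 4 + 2*y 5 - y 7) \<le> 2"
    by (rule sq_le8) (use S nn in smt)
  have b4: "-2 \<le> (-2*y 3 + 2*y 4 - y 7) \<and> (-2*y 3 + 2*y 4 - y 7) \<le> 2"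
    by (rule sq_le8) (use S nn in smt)
  have b5: "-2 \<le> (-2*y 2 + 2*y 3 - y 7) \<and> (-2*y 2 + 2*y 3 - y 7) \<le> 2"
    by (rule sq_le8) (use S nn in smt)
  have b6: "-2 \<le> (-2*y 1 + 2*y 2 - y 7) \<and> (-2*y 1 + 2*y 2 - y 7) \<le> 2"
    by (rule sq_le8) (use S nn in smt)
  have b7: "-2 \<le> (2*y 1 - y 7) \<and> (2*y 1 - y 7) \<le> 2"
    by (rule sq_le8) (use S nn in smt)
  have b8: "-2 \<le> (y 7) \<and> (y 7) \<le> 2"
    by (rule sq_le8) (use S nn in smt)
  have "k = 1 \<or> k = 2 \<or> k = 3 \<or> k = 4 \<or> k = 5 \<or> k = 6 \<or> k = 7 \<or> k = 8" using assms(2) by auto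
  then show ?thesis using b1 b2 b3 b4 b5 b6 b7 b8 by (elim disjE) (simp; linarith)+
qed

lemma finite_PhiE8: "finite PhiE8"
proof -
  have "PhiE8 \<subseteq> {f. \<forall>x. (x \<in> {1..8} \<longrightarrow> f x \<in> {-10..10}) \<and> (x \<notin> {1..8} \<longrightarrow> f x = 0)}"
    using PhiE8_bound by (auto simp: PhiE8_def E8_iff)
  moreover have "finite {f::lat. \<forall>x. (x \<in> {1..8} \<longrightarrow> f x \<in> {-10..10}) \<and> (x \<notin> {1..8} \<longrightarrow> f x = 0)}"
    by (rule finite_set_of_finite_funs) auto
  ultimately show ?thesis by (rule finite_subset)
qed


lemma nn_hr: "1 \<le> i \<Longrightarrow> i \<le> 8 \<Longrightarrow> int (nn i) = hr i"
proof -
  assume "1 \<le> i" "i \<le> 8"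
  then have "i = 1 \<or> i = 2 \<or> i = 3 \<or> i = 4 \<or> i = 5 \<or> i = 6 \<or> i = 7 \<or> i = 8" by auto
  then show ?thesis by (elim disjE) (simp_all add: nn_def hr_def)
qed

lemma nn_pos: "i \<le> 8 \<Longrightarrow> 1 \<le> nn i"
proof -
  assume "i \<le> 8"
  then have "i = 0 \<or> i = 1 \<or> i = 2 \<or> i = 3 \<or> i = 4 \<or> i = 5 \<or> i = 6 \<or> i = 7 \<or> i = 8" by auto
  then show ?thesis by (elim disjE) (simp_all add: nn_def)
qed

lemma nn0: "nn 0 = 1" by (simp add: nn_def)

lemma sr_pos: "1 \<le> j \<Longrightarrow> sr j k = (if k = j then 1 else 0)" by (simp add: sr_def)
lemma sr_zero: "sr 0 k = - hr k" by (simp add: sr_def)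
lemma hr_out: "k \<notin> {1..8} \<Longrightarrow> hr k = 0" by (auto simp: hr_def)

lemma sr_E8: "j \<le> 8 \<Longrightarrow> sr j \<in> E8"
  by (auto simp: E8_iff sr_def hr_def)

lemma lcomb_E8: assumes "C \<subseteq> {0..8}" shows "lcomb c C \<in> E8"
proof -
  have "\<And>k. k \<notin> {1..8} \<Longrightarrow> (\<Sum>j\<in>C. c j * sr j k) = 0"
  proof -
    fix k :: nat assume k: "k \<notin> {1..8}"
    have "\<And>j. j \<in> C \<Longrightarrow> sr j k = 0"
    proof -
      fix j assume "j \<in> C"
      then have "j \<le> 8" using assms by auto
      then show "sr j k = 0" using sr_E8[of j] k by (simp add: E8_iff)
    qed
    then show "(\<Sum>j\<in>C. c j * sr j k) = 0" by simp
  qed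
  then show ?thesis by (simp add: E8_iff lcomb_def)
qed

lemma Lsub_char: assumes "i \<le> 8" shows "x \<in> Lsub i \<longleftrightarrow> x \<in> E8 \<and> int (nn i) dvd x i"
proof
  assume "x \<in> Lsub i"
  then obtain c where xc: "x = lcomb c ({0..8} - {i})" by (auto simp: Lsub_def)
  have E: "x \<in> E8" unfolding xc by (rule lcomb_E8) auto
  have "int (nn i) dvd x i"
  proof (cases "i = 0")
    case True then show ?thesis by (simp add: nn0)
  next
    case False
    then have i1: "1 \<le> i" by simp
    have D: "{0..8} - {i} = insert 0 ({1..8} - {i})" using False by auto
    have "x i = c 0 * sr 0 i + (\<Sum>j\<in>{1..8} - {i}. c j * sr j i)"
      unfolding xc lcomb_def D by (subst sum.insert) auto
    also have "(\<Sum>j\<in>{1..8} - {i}. c j * sr j i) = 0"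
      by (rule sum.neutral) (auto simp: sr_pos)
    finally have "x i = - c 0 * hr i" by (simp add: sr_zero)
    then show ?thesis using nn_hr[OF i1 assms] by simp
  qed
  then show "x \<in> E8 \<and> int (nn i) dvd x i" using E by simp
next
  assume A: "x \<in> E8 \<and> int (nn i) dvd x i"
  show "x \<in> Lsub i"
  proof (cases "i = 0")
    case True
    have "lcomb x ({0..8} - {i}) = x"
    proof
      fix k
      have D: "{0..8} - {i} = {1..8}" using True by auto
      have "lcomb x ({0..8} - {i}) k = (\<Sum>j\<in>{1..8}. x j * (if k = j then 1 else 0))"
        unfolding lcomb_def D by (rule sum.cong) (auto simp: sr_pos)
      also have "\<dots> = (if k \<in> {1..8} then x k else 0)"
        by (simp add: if_distrib[where f="\<lambda>t. x _ * t"] sum.delta cong: if_cong)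
      also have "\<dots> = x k" using A by (auto simp: E8_iff)
      finally show "lcomb x ({0..8} - {i}) k = x k" .
    qed
    then show ?thesis unfolding Lsub_def by (metis (mono_tags, lifting) mem_Collect_eq)
  next
    case False
    then have i1: "1 \<le> i" by simp
    obtain t where t: "x i = hr i * t" using A nn_hr[OF i1 assms] by (auto elim: dvdE)
    define c where "c = (\<lambda>j. if j = 0 then - t else x j - t * hr j)"
    have D: "{0..8} - {i} = insert 0 ({1..8} - {i})" using False by auto
    have "lcomb c ({0..8} - {i}) = x"
    proof
      fix k
      have "lcomb c ({0..8} - {i}) k = c 0 * sr 0 k + (\<Sum>j\<in>{1..8} - {i}. c j * sr j k)"
        unfolding lcomb_def D by (subst sum.insert) auto
      also have "(\<Sum>j\<in>{1..8} - {i}. c j * sr j k) = (\<Sum>j\<in>{1..8} - {i}. if k = j then c j else 0)"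
        by (rule sum.cong) (auto simp: sr_pos)
      also have "\<dots> = (if k \<in> {1..8} - {i} then c k else 0)" by (simp add: sum.delta)
      finally have e: "lcomb c ({0..8} - {i}) k = t * hr k + (if k \<in> {1..8} - {i} then c k else 0)"
        by (simp add: c_def sr_zero)
      show "lcomb c ({0..8} - {i}) k = x k"
      proof (cases "k \<in> {1..8}")
        case True
        show ?thesis
        proof (cases "k = i")
          case True then show ?thesis using e t \<open>1 \<le> i\<close> by (simp add: algebra_simps)
        next
          case False then show ?thesis using e \<open>k \<in> {1..8}\<close> by (simp add: c_def)
        qed
      next
        case False then show ?thesis using e A \<open>k \<notin> {1..8}\<close> hr_out[of k] by (auto simp: E8_iff)
      qed
    qed
    then show ?thesis unfolding Lsub_def by (metis (mono_tags, lifting) mem_Collect_eq)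
  qed
qed

lemma coset_idx_eq: assumes "i \<le> 8" "g \<in> E8" shows "coset_idx i g = nat (g i mod int (nn i))"
  unfolding coset_idx_def
proof (rule the_equality)
  have np: "0 < int (nn i)" using nn_pos[OF assms(1)] by simp
  let ?j = "nat (g i mod int (nn i))"
  have jl: "?j < nn i" using np by (simp add: nat_less_iff)
  have "(\<lambda>k. g k - int ?j * sr i k) \<in> Lsub i"
  proof -
    have e: "(\<lambda>k. g k - int ?j * sr i k) \<in> E8" using assms sr_E8[of i] by (simp add: E8_iff)
    have "int (nn i) dvd g i - int ?j * sr i i"
    proof (cases "i = 0")
      case True then show ?thesis by (simp add: nn0)
    next
      case False
      then have "sr i i = 1" by (simp add: sr_pos)
      moreover have "int ?j = g i mod int (nn i)" using np by simp
      ultimately show ?thesis by (simp add: mod_eq_dvd_iff[symmetric] mod_diff_eq[symmetric]) 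
    qed
    then show ?thesis using e Lsub_char[OF assms(1)] by simp
  qed
  then show "?j < nn i \<and> (\<lambda>k. g k - int ?j * sr i k) \<in> Lsub i" using jl by simp
  fix j assume H: "j < nn i \<and> (\<lambda>k. g k - int j * sr i k) \<in> Lsub i"
  then have dv: "int (nn i) dvd g i - int j * sr i i" using Lsub_char[OF assms(1)] by simp
  show "j = ?j"
  proof (cases "i = 0")
    case True then show ?thesis using H by (simp add: nn0)
  next
    case False
    then have "sr i i = 1" by (simp add: sr_pos)
    then have "int (nn i) dvd g i - int j" using dv by simp
    then have "g i mod int (nn i) = int j mod int (nn i)" by (simp add: mod_eq_dvd_iff)
    also have "\<dots> = int j" using H by simp
    finally show ?thesis by simp
  qed
qed



lemma supp_iff: "b \<in> supp v \<longleftrightarrow> v b \<noteq> 0" by (simp add: supp_def)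

lemma supp_bvec: "supp (bvec b) = {b}" by (auto simp: supp_def bvec_def)

lemma extend_fin: assumes "finite A" "supp v \<subseteq> A"
  shows "extend T v b' = (\<Sum>b\<in>A. v b * T b b')"
  unfolding extend_def by (rule sum.mono_neutral_left) (use assms in \<open>auto simp: supp_def\<close>)

lemma extend_bvec: "extend T (bvec b) b' = T b b'"
  unfolding extend_def supp_bvec by (simp add: bvec_def)

lemma extend_zero: "extend T (\<lambda>_. 0) b' = 0"
  by (simp add: extend_def supp_def)

lemma extend_sum: assumes "finite K" "\<forall>k\<in>K. finite (supp (f k))"
  shows "extend T (\<lambda>b. \<Sum>k\<in>K. f k b) b' = (\<Sum>k\<in>K. extend T (f k) b')"
proof -
  let ?A = "\<Union>k\<in>K. supp (f k)"
  have fA: "finite ?A" using assms by auto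
  have sA: "supp (\<lambda>b. \<Sum>k\<in>K. f k b) \<subseteq> ?A"
  proof
    fix b assume "b \<in> supp (\<lambda>b. \<Sum>k\<in>K. f k b)"
    then have "(\<Sum>k\<in>K. f k b) \<noteq> 0" by (simp add: supp_def)
    then obtain k where "k \<in> K" "f k b \<noteq> 0" by (rule sum.not_neutral_contains_not_neutral)
    then show "b \<in> ?A" by (auto simp: supp_def)
  qed
  have "extend T (\<lambda>b. \<Sum>k\<in>K. f k b) b' = (\<Sum>b\<in>?A. (\<Sum>k\<in>K. f k b) * T b b')"
    by (rule extend_fin[OF fA sA])
  also have "\<dots> = (\<Sum>k\<in>K. \<Sum>b\<in>?A. f k b * T b b')"
    by (simp add: sum_distrib_right sum.swap[of _ ?A])
  also have "\<dots> = (\<Sum>k\<in>K. extend T (f k) b')"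
  proof (rule sum.cong[OF refl])
    fix k assume "k \<in> K"
    then show "(\<Sum>b\<in>?A. f k b * T b b') = extend T (f k) b'"
      by (intro extend_fin[symmetric] fA) auto
  qed
  finally show ?thesis .
qed

lemma extend_scale: "extend T (\<lambda>b. c * f b) b' = c * extend T f b'"
proof (cases "c = 0")
  case True then show ?thesis by (simp add: extend_zero)
next
  case False
  then have s: "supp (\<lambda>b. c * f b) = supp f" by (auto simp: supp_def)
  show ?thesis
  proof (cases "finite (supp f)")
    case True
    have "extend T (\<lambda>b. c * f b) b' = (\<Sum>b\<in>supp f. c * f b * T b b')"
      by (rule extend_fin[OF True]) (simp add: s)
    also have "\<dots> = c * (\<Sum>b\<in>supp f. f b * T b b')" by (simp add: sum_distrib_left mult.assoc)
    also have "\<dots> = c * extend T f b'" by (simp add: extend_def)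
    finally show ?thesis .
  next
    case False then show ?thesis by (simp add: extend_def s)
  qed
qed

lemma extend_add: assumes "finite (supp f)" "finite (supp g)"
  shows "extend T (\<lambda>b. f b + g b) b' = extend T f b' + extend T g b'"
proof -
  let ?A = "supp f \<union> supp g"
  have "supp (\<lambda>b. f b + g b) \<subseteq> ?A" by (auto simp: supp_def)
  then have "extend T (\<lambda>b. f b + g b) b' = (\<Sum>b\<in>?A. (f b + g b) * T b b')"
    using assms by (intro extend_fin) auto
  also have "\<dots> = (\<Sum>b\<in>?A. f b * T b b') + (\<Sum>b\<in>?A. g b * T b b')"
    by (simp add: distrib_right sum.distrib)
  also have "\<dots> = extend T f b' + extend T g b'"
    using extend_fin[of ?A f T b'] extend_fin[of ?A g T b'] assms by auto
  finally show ?thesis .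
qed

lemma fin_supp_sum: "finite K \<Longrightarrow> \<forall>k\<in>K. finite (supp (f k)) \<Longrightarrow> finite (supp (\<lambda>b. \<Sum>k\<in>K. f k b))"
proof -
  assume a: "finite K" "\<forall>k\<in>K. finite (supp (f k))"
  have "supp (\<lambda>b. \<Sum>k\<in>K. f k b) \<subseteq> (\<Union>k\<in>K. supp (f k))"
  proof
    fix b assume "b \<in> supp (\<lambda>b. \<Sum>k\<in>K. f k b)"
    then have "(\<Sum>k\<in>K. f k b) \<noteq> 0" by (simp add: supp_def)
    then obtain k where "k \<in> K" "f k b \<noteq> 0" by (rule sum.not_neutral_contains_not_neutral)
    then show "b \<in> (\<Union>k\<in>K. supp (f k))" by (auto simp: supp_def)
  qed
  then show ?thesis using a by (meson finite_UN_I finite_subset)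
qed

lemma fin_supp_scale: "finite (supp f) \<Longrightarrow> finite (supp (\<lambda>b. c * f b))"
  by (rule finite_subset[of _ "supp f"]) (auto simp: supp_def)

lemma fin_supp_add: "finite (supp f) \<Longrightarrow> finite (supp g) \<Longrightarrow> finite (supp (\<lambda>b. f b + g b))"
  by (rule finite_subset[of _ "supp f \<union> supp g"]) (auto simp: supp_def)

lemma fin_supp_bvec: "finite (supp (bvec b))" by (simp add: supp_bvec)

lemma fin_supp_zero: "finite (supp (\<lambda>_. 0))" by (simp add: supp_def)

lemma fin_heis_b: "finite (supp (heis_b a m b))"
proof -
  obtain M g where b: "b = (M, g)" by (cases b)
  show ?thesis
  proof (cases "m < 0")
    case True then show ?thesis by (simp add: heis_b_def b supp_bvec)
  next
    case False
    show ?thesis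
    proof (cases "m = 0")
      case True then show ?thesis
        by (simp add: heis_b_def b) (rule fin_supp_scale[OF fin_supp_bvec])
    next
      case False
      then have e: "heis_b a m b = (\<lambda>b'. \<Sum>p\<in>set_mset M. if snd p = nat m
            then of_int m * of_int (ip (sr a) (sr (fst p))) * of_nat (count M p) * bvec (M - {#p#}, g) b'
            else 0)" using \<open>\<not> m < 0\<close> by (simp add: heis_b_def b)
      have "finite (supp (\<lambda>b'. \<Sum>p\<in>set_mset M. if snd p = nat m
            then of_int m * of_int (ip (sr a) (sr (fst p))) * of_nat (count M p) * bvec (M - {#p#}, g) b'
            else 0))"
        apply (rule fin_supp_sum)
         apply simp
        apply (intro ballI)
        subgoal for p by (cases "snd p = nat m") (auto intro: fin_supp_scale fin_supp_bvec simp: fin_supp_zero)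
        done
      then show ?thesis using e by simp
    qed
  qed
qed

lemma fin_extend: assumes "finite (supp v)" "\<And>b. finite (supp (T b))" shows "finite (supp (extend T v))"
proof -
  have "supp (extend T v) \<subseteq> (\<Union>b\<in>supp v. supp (T b))"
  proof
    fix b' assume "b' \<in> supp (extend T v)"
    then have "(\<Sum>b\<in>supp v. v b * T b b') \<noteq> 0" by (simp add: supp_def extend_def)
    then obtain b where "b \<in> supp v" "v b * T b b' \<noteq> 0" by (rule sum.not_neutral_contains_not_neutral)
    then show "b' \<in> (\<Union>b\<in>supp v. supp (T b))" by (metis (mono_tags) UN_I mult_eq_0_iff supp_iff)
  qed
  then show ?thesis using assms by (meson finite_UN_I finite_subset)
qed

lemma fin_heis: "finite (supp v) \<Longrightarrow> finite (supp (heis a m v))"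
  unfolding heis_def by (rule fin_extend) (auto intro: fin_heis_b)

lemma fin_hmode: "finite (supp v) \<Longrightarrow> finite (supp (hmode c m v))"
  unfolding hmode_def by (rule fin_supp_sum) (auto intro!: fin_supp_scale fin_heis)

lemma heis_bvec: "heis a m (bvec b) = heis_b a m b"
  by (rule ext) (simp add: heis_def extend_bvec)

lemma heis_zero: "heis a m (\<lambda>_. 0) = (\<lambda>_. 0)"
  by (rule ext) (simp add: heis_def extend_zero)

lemma hmode_zero: "hmode c m (\<lambda>_. 0) = (\<lambda>_. 0)"
  by (rule ext) (simp add: hmode_def heis_zero)

lemma hmode_czero: "hmode (\<lambda>_. 0) m v = (\<lambda>_. 0)"
  by (rule ext) (simp add: hmode_def)

lemma heis_sum: "finite K \<Longrightarrow> \<forall>k\<in>K. finite (supp (f k)) \<Longrightarrow>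
    heis a m (\<lambda>b. \<Sum>k\<in>K. f k b) b' = (\<Sum>k\<in>K. heis a m (f k) b')"
  unfolding heis_def by (rule extend_sum)

lemma heis_scale: "heis a m (\<lambda>b. c * f b) b' = c * heis a m f b'"
  unfolding heis_def by (rule extend_scale)

lemma heis_add: "finite (supp f) \<Longrightarrow> finite (supp g) \<Longrightarrow>
    heis a m (\<lambda>b. f b + g b) b' = heis a m f b' + heis a m g b'"
  unfolding heis_def by (rule extend_add)

lemma shift_zero: "shift \<beta> (\<lambda>_. 0) = (\<lambda>_. 0)" unfolding shift_def by (rule ext) auto

lemma shift_bvec: "shift \<beta> (bvec (M, g)) = bvec (M, (\<lambda>k. g k + \<beta> k))"
proof (rule ext)
  fix b :: bas
  obtain M' g' where b: "b = (M', g')" by (cases b)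
  have "((\<lambda>k. g' k - \<beta> k) = g) = (g' = (\<lambda>k. g k + \<beta> k))" by (simp add: fun_eq_iff diff_eq_eq)
  then show "shift \<beta> (bvec (M, g)) b = bvec (M, \<lambda>k. g k + \<beta> k) b" by (simp add: shift_def bvec_def b)
qed

lemma foldr_hmode_zero: "foldr (\<lambda>r f. hmode c (h r) \<circ> f) rs id (\<lambda>_. 0) = (\<lambda>_. 0)"
  by (induction rs) (auto simp: hmode_zero)

lemma Eminus_zero: "Eminus c p (\<lambda>_. 0) = (\<lambda>_. 0)"
proof -
  have "\<And>rs. foldr (\<lambda>r f. hmode c (- int r) \<circ> f) rs id (\<lambda>_. 0) = (\<lambda>_. 0)"
    using foldr_hmode_zero[where h = "\<lambda>r. - int r"] by simp
  then show ?thesis by (simp add: Eminus_def)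
qed

lemma Eplus_zero: "Eplus c q (\<lambda>_. 0) = (\<lambda>_. 0)"
proof -
  have "\<And>rs. foldr (\<lambda>r f. hmode c (int r) \<circ> f) rs id (\<lambda>_. 0) = (\<lambda>_. 0)"
    using foldr_hmode_zero[where h = "\<lambda>r. int r"] by simp
  then show ?thesis by (simp add: Eplus_def)
qed

lemma hprod_zero: "hprod xs ms js (\<lambda>_. 0) = (\<lambda>_. 0)"
  unfolding hprod_def by (induction js) (auto simp: heis_zero)

lemma foldr_hmode_czero: "rs \<noteq> [] \<Longrightarrow> foldr (\<lambda>r f. hmode (\<lambda>_. 0) (h r) \<circ> f) rs id v = (\<lambda>_. 0)"
  by (cases rs) (auto simp: hmode_czero)

lemma rs_nonempty: "0 < (p::nat) \<Longrightarrow> sum_list rs = p \<Longrightarrow> rs \<noteq> []" by auto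

lemma Eminus_czero: "0 < p \<Longrightarrow> Eminus (\<lambda>_. 0) p v = (\<lambda>_. 0)"
proof -
  assume p: "0 < p"
  have "\<And>rs. sum_list rs = p \<Longrightarrow> foldr (\<lambda>r f. hmode (\<lambda>_. 0) (- int r) \<circ> f) rs id v = (\<lambda>_. 0)"
    using foldr_hmode_czero[where h = "\<lambda>r. - int r"] rs_nonempty[OF p] by simp
  then show ?thesis by (simp add: Eminus_def)
qed

lemma Eplus_czero: "0 < q \<Longrightarrow> Eplus (\<lambda>_. 0) q v = (\<lambda>_. 0)"
proof -
  assume p: "0 < q"
  have "\<And>rs. sum_list rs = q \<Longrightarrow> foldr (\<lambda>r f. hmode (\<lambda>_. 0) (int r) \<circ> f) rs id v = (\<lambda>_. 0)"
    using foldr_hmode_czero[where h = "\<lambda>r. int r"] rs_nonempty[OF p] by simp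
  then show ?thesis by (simp add: Eplus_def)
qed

lemma rs0: "{rs. set rs \<subseteq> {1..0::nat} \<and> sum_list rs = 0} = {[]}"
  by auto

lemma rs2: "{rs. set rs \<subseteq> {1..2::nat} \<and> sum_list rs = 2} = {[2], [1,1]}"
proof
  show "{[2], [1, 1]} \<subseteq> {rs. set rs \<subseteq> {1..2::nat} \<and> sum_list rs = 2}" by auto
  show "{rs. set rs \<subseteq> {1..2::nat} \<and> sum_list rs = 2} \<subseteq> {[2], [1, 1]}"
  proof
    fix rs :: "nat list" assume "rs \<in> {rs. set rs \<subseteq> {1..2} \<and> sum_list rs = 2}"
    then have h: "\<forall>x\<in>set rs. 1 \<le> x \<and> x \<le> 2" "sum_list rs = 2" by auto
    show "rs \<in> {[2], [1, 1]}"
    proof (cases rs)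
      case Nil then show ?thesis using h by simp
    next
      case (Cons a t)
      show ?thesis
      proof (cases t)
        case Nil then show ?thesis using h Cons by auto
      next
        case (Cons b u)
        have ab: "1 \<le> a" "1 \<le> b" "a + (b + sum_list u) = 2"
          using h \<open>rs = a # t\<close> Cons by auto
        then have a1: "a = 1" "b = 1" "sum_list u = 0" by linarith+
        have u: "u = []"
        proof (cases u)
          case Nil then show ?thesis .
        next
          case (Cons c w)
          then have "1 \<le> c" using h \<open>rs = a # t\<close> \<open>t = b # u\<close> by auto
          then show ?thesis using a1(3) Cons by simp
        qed
        show ?thesis using \<open>rs = a # t\<close> \<open>t = b # u\<close> a1 u by simp
      qed
    qed
  qed
qed

lemma Eminus_0: "Eminus c 0 v = v"
  unfolding Eminus_def rs0 by simp

lemma Eplus_0: "Eplus c 0 v = v"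
  unfolding Eplus_def rs0 by simp

lemma Eminus_2: "Eminus c 2 v = (\<lambda>b. (1/2) * hmode c (-2) v b + (1/2) * hmode c (-1) (hmode c (-1) v) b)"
  unfolding Eminus_def rs2 by (rule ext) simp

lemma Eplus_2: "Eplus c 2 v = (\<lambda>b. (-1/2) * hmode c 2 v b + (1/2) * hmode c 1 (hmode c 1 v) b)"
  unfolding Eplus_def rs2 by (rule ext) simp



definition hom :: "vvec \<Rightarrow> int \<Rightarrow> bool" where
  "hom v d \<longleftrightarrow> (\<forall>b. v b \<noteq> 0 \<longrightarrow> int (deg (fst b)) = d)"

lemma hom_zero: "hom v d \<Longrightarrow> d < 0 \<Longrightarrow> v = (\<lambda>_. 0)"
  unfolding hom_def by (rule ext) (metis of_nat_0_le_iff not_less)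

lemma hom_bvec: "hom (bvec (M, g)) (int (deg M))"
  by (simp add: hom_def bvec_def)

lemma deg_add_mset: "deg (add_mset p M) = snd p + deg M" by (simp add: deg_def)

lemma deg_remove: "p \<in># M \<Longrightarrow> deg M = deg (M - {#p#}) + snd p"
proof -
  assume "p \<in># M"
  then have "M = add_mset p (M - {#p#})" by simp
  then have "deg M = deg (add_mset p (M - {#p#}))" by simp
  then show ?thesis by (simp add: deg_add_mset)
qed

lemma heis_b_pos: "0 < m \<Longrightarrow> heis_b a m (M, g) = (\<lambda>b'. \<Sum>p\<in>set_mset M. if snd p = nat m
            then of_int m * of_int (ip (sr a) (sr (fst p))) * of_nat (count M p) * bvec (M - {#p#}, g) b'
            else 0)"
  by (simp add: heis_b_def)

lemma hom_heis_pos: assumes m: "0 < m" and h: "hom v d" shows "hom (heis a m v) (d - m)"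
  unfolding hom_def
proof (intro allI impI)
  fix b' assume nz: "heis a m v b' \<noteq> 0"
  then have "(\<Sum>b\<in>supp v. v b * heis_b a m b b') \<noteq> 0" by (simp add: heis_def extend_def)
  then obtain b where b: "b \<in> supp v" "v b * heis_b a m b b' \<noteq> 0" by (rule sum.not_neutral_contains_not_neutral)
  obtain M g where bM: "b = (M, g)" by (cases b)
  have dM: "int (deg M) = d" using h b bM by (auto simp: hom_def)
  have "heis_b a m (M, g) b' \<noteq> 0" using b bM by simp
  then have "(\<Sum>p\<in>set_mset M. if snd p = nat m
            then of_int m * of_int (ip (sr a) (sr (fst p))) * of_nat (count M p) * bvec (M - {#p#}, g) b'
            else (0::complex)) \<noteq> 0" using m by (simp add: heis_b_pos)
  then obtain p where p: "p \<in> set_mset M" "(if snd p = nat m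
            then of_int m * of_int (ip (sr a) (sr (fst p))) * of_nat (count M p) * bvec (M - {#p#}, g) b'
            else (0::complex)) \<noteq> 0" by (rule sum.not_neutral_contains_not_neutral)
  then have sp: "snd p = nat m" and bb: "b' = (M - {#p#}, g)" by (auto simp: bvec_def split: if_splits)
  have "deg M = deg (M - {#p#}) + snd p" using p(1) by (simp add: deg_remove)
  then show "int (deg (fst b')) = d - m" using bb sp dM m by simp
qed

lemma hom_hmode_pos: assumes m: "0 < m" and h: "hom v d" shows "hom (hmode c m v) (d - m)"
  unfolding hom_def
proof (intro allI impI)
  fix b' assume "hmode c m v b' \<noteq> 0"
  then have "(\<Sum>a=1..8. c a * heis a m v b') \<noteq> 0" by (simp add: hmode_def)
  then obtain a where "c a * heis a m v b' \<noteq> 0" by (rule sum.not_neutral_contains_not_neutral)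
  then have "heis a m v b' \<noteq> 0" by simp
  moreover have "hom (heis a m v) (d - m)" by (rule hom_heis_pos[OF m h])
  ultimately show "int (deg (fst b')) = d - m" unfolding hom_def by blast
qed

lemma hom_foldr: "(\<forall>r\<in>set rs. 1 \<le> r) \<Longrightarrow> hom v d \<Longrightarrow>
    hom (foldr (\<lambda>r f. hmode c (int r) \<circ> f) rs id v) (d - int (sum_list rs))"
proof (induction rs)
  case Nil then show ?case by simp
next
  case (Cons r rs)
  have "hom (foldr (\<lambda>r f. hmode c (int r) \<circ> f) rs id v) (d - int (sum_list rs))"
    by (rule Cons.IH) (use Cons.prems in auto)
  then have X: "hom (hmode c (int r) (foldr (\<lambda>r f. hmode c (int r) \<circ> f) rs id v)) (d - int (sum_list rs) - int r)"
    using Cons.prems by (intro hom_hmode_pos) auto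
  have e1: "d - int (sum_list rs) - int r = d - int (sum_list (r # rs))" by simp
  have e2: "foldr (\<lambda>r f. hmode c (int r) \<circ> f) (r # rs) id v = hmode c (int r) (foldr (\<lambda>r f. hmode c (int r) \<circ> f) rs id v)"
    by simp
  show ?case unfolding e2 e1[symmetric] by (rule X)
qed

lemma Eplus_deg: assumes "hom v d" "d < int q" shows "Eplus c q v = (\<lambda>_. 0)"
proof -
  have "\<And>rs. set rs \<subseteq> {1..q} \<Longrightarrow> sum_list rs = q \<Longrightarrow> foldr (\<lambda>r f. hmode c (int r) \<circ> f) rs id v = (\<lambda>_. 0)"
  proof -
    fix rs assume rs: "set rs \<subseteq> {1..q}" "sum_list rs = q"
    have "\<forall>r\<in>set rs. 1 \<le> r" using rs(1) by auto
    then have "hom (foldr (\<lambda>r f. hmode c (int r) \<circ> f) rs id v) (d - int q)"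
      using hom_foldr[OF _ assms(1), of rs c] rs(2) by simp
    then show "foldr (\<lambda>r f. hmode c (int r) \<circ> f) rs id v = (\<lambda>_. 0)"
      using assms(2) by (intro hom_zero) auto
  qed
  then show ?thesis by (simp add: Eplus_def)
qed

lemma heis_neg_bvec: "m < 0 \<Longrightarrow> heis a m (bvec (M, g)) = bvec (add_mset (a, nat (- m)) M, g)"
  by (simp add: heis_bvec heis_b_def)

lemma heis_0_bvec: "heis a 0 (bvec (M, g)) = (\<lambda>b'. complex_of_real (sqrt 2) * of_int (ip (sr a) g) * bvec (M, g) b')"
  by (simp add: heis_bvec heis_b_def)

lemma heis_pos_none: assumes "0 < m" "\<forall>p\<in>#M. snd p \<noteq> nat m"
  shows "heis a m (bvec (M, g)) = (\<lambda>_. 0)"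
  using assms by (simp add: heis_bvec heis_b_pos)

lemma heis_1_single: "heis a 1 (bvec ({#(d,1)#}, g)) = (\<lambda>b'. of_int (ip (sr a) (sr d)) * bvec ({#}, g) b')"
  by (simp add: heis_bvec heis_b_pos)

lemma heis_1_pair: "heis a 1 (bvec ({#(c,1), (d,1)#}, g)) =
   (\<lambda>b'. of_int (ip (sr a) (sr c)) * bvec ({#(d,1)#}, g) b' + of_int (ip (sr a) (sr d)) * bvec ({#(c,1)#}, g) b')"
proof (cases "c = d")
  case True
  then show ?thesis by (rule_tac ext) (simp add: heis_bvec heis_b_pos)
next
  case False
  then have "set_mset {#(c,1), (d,1)#} = {(c,1), (d,1)}" by auto
  then show ?thesis using False by (rule_tac ext) (simp add: heis_bvec heis_b_pos)
qed

lemma hmode_add: "finite (supp f) \<Longrightarrow> finite (supp g) \<Longrightarrow>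
    hmode c m (\<lambda>b. f b + g b) b' = hmode c m f b' + hmode c m g b'"
  by (simp add: hmode_def heis_add distrib_left sum.distrib)

lemma hmode_scale: "hmode c m (\<lambda>b. k * f b) b' = k * hmode c m f b'"
  by (simp add: hmode_def heis_scale sum_distrib_left mult.left_commute)

lemma hmode_sum: "finite K \<Longrightarrow> \<forall>k\<in>K. finite (supp (f k)) \<Longrightarrow>
    hmode c m (\<lambda>b. \<Sum>k\<in>K. f k b) b' = (\<Sum>k\<in>K. hmode c m (f k) b')"
  by (simp add: hmode_def heis_sum sum_distrib_left sum.swap[of _ K])

lemma ip_lin: "(\<Sum>a=1..8. of_int (\<beta> a) * of_int (ip (sr a) y) :: complex) = of_int (ip \<beta> y)"
proof -
  have "(\<Sum>a=1..8. \<beta> a * ip (sr a) y) = ip \<beta> y"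
    unfolding sum8 by (simp add: ip_explicit sr_def algebra_simps)
  then have "of_int (\<Sum>a=1..8. \<beta> a * ip (sr a) y) = (of_int (ip \<beta> y) :: complex)" by simp
  then show ?thesis by simp
qed

lemmas ip_lin' = ip_lin[unfolded One_nat_def]

definition sb :: "lat \<Rightarrow> nat \<Rightarrow> complex" where
  "sb \<beta> = (\<lambda>a. complex_of_real (sqrt 2) * of_int (\<beta> a))"

lemma s2: "complex_of_real (sqrt 2) * complex_of_real (sqrt 2) = 2"
  by (simp flip: of_real_mult)

lemma hmode_sb_1_single: "hmode (sb \<beta>) 1 (bvec ({#(d,1)#}, g)) =
   (\<lambda>b'. complex_of_real (sqrt 2) * of_int (ip \<beta> (sr d)) * bvec ({#}, g) b')"
proof (rule ext)
  fix b'
  have "hmode (sb \<beta>) 1 (bvec ({#(d,1)#}, g)) b' =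
     (\<Sum>a=1..8. complex_of_real (sqrt 2) * (of_int (\<beta> a) * of_int (ip (sr a) (sr d)))) * bvec ({#}, g) b'"
    unfolding hmode_def sb_def heis_1_single by (simp add: sum_distrib_right mult.assoc)
  also have "\<dots> = complex_of_real (sqrt 2) * of_int (ip \<beta> (sr d)) * bvec ({#}, g) b'"
    by (simp add: sum_distrib_left[symmetric] ip_lin ip_lin')
  finally show "hmode (sb \<beta>) 1 (bvec ({#(d,1)#}, g)) b' = complex_of_real (sqrt 2) * of_int (ip \<beta> (sr d)) * bvec ({#}, g) b'" .
qed

lemma hmode_sb_1_pair: "hmode (sb \<beta>) 1 (bvec ({#(c,1), (d,1)#}, g)) =
   (\<lambda>b'. complex_of_real (sqrt 2) * of_int (ip \<beta> (sr c)) * bvec ({#(d,1)#}, g) b'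
       + complex_of_real (sqrt 2) * of_int (ip \<beta> (sr d)) * bvec ({#(c,1)#}, g) b')"
proof (rule ext)
  fix b'
  have "hmode (sb \<beta>) 1 (bvec ({#(c,1), (d,1)#}, g)) b' =
     (\<Sum>a=1..8. complex_of_real (sqrt 2) * (of_int (\<beta> a) * of_int (ip (sr a) (sr c)))) * bvec ({#(d,1)#}, g) b'
   + (\<Sum>a=1..8. complex_of_real (sqrt 2) * (of_int (\<beta> a) * of_int (ip (sr a) (sr d)))) * bvec ({#(c,1)#}, g) b'"
    unfolding hmode_def sb_def heis_1_pair by (simp add: sum_distrib_right mult.assoc distrib_left sum.distrib)
  also have "\<dots> = complex_of_real (sqrt 2) * of_int (ip \<beta> (sr c)) * bvec ({#(d,1)#}, g) b'
       + complex_of_real (sqrt 2) * of_int (ip \<beta> (sr d)) * bvec ({#(c,1)#}, g) b'"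
    by (simp add: sum_distrib_left[symmetric] ip_lin ip_lin')
  finally show "hmode (sb \<beta>) 1 (bvec ({#(c,1), (d,1)#}, g)) b' = complex_of_real (sqrt 2) * of_int (ip \<beta> (sr c)) * bvec ({#(d,1)#}, g) b'
       + complex_of_real (sqrt 2) * of_int (ip \<beta> (sr d)) * bvec ({#(c,1)#}, g) b'" .
qed

lemma aux_sq2: fixes r X Y e :: complex assumes "r * r = 2"
  shows "r * X * (r * Y * e) + r * Y * (r * X * e) = 4 * (X * Y) * e"
proof -
  have "r * X * (r * Y * e) + r * Y * (r * X * e) = 2 * (r * r) * (X * Y) * e" by (simp add: algebra_simps)
  then show ?thesis using assms by simp
qed

lemma Eplus_sb_2_pair: "Eplus (sb \<beta>) 2 (bvec ({#(c,1), (d,1)#}, g)) =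
   (\<lambda>b'. 2 * of_int (ip \<beta> (sr c) * ip \<beta> (sr d)) * bvec ({#}, g) b')"
proof (rule ext)
  fix b'
  let ?r = "complex_of_real (sqrt 2)"
  let ?X = "of_int (ip \<beta> (sr c)) :: complex"
  let ?Y = "of_int (ip \<beta> (sr d)) :: complex"
  let ?e = "bvec ({#}, g) b'"
  have z: "hmode (sb \<beta>) 2 (bvec ({#(c,1), (d,1)#}, g)) b' = 0"
  proof -
    have "\<And>a. heis a 2 (bvec ({#(c,1), (d,1)#}, g)) = (\<lambda>_. 0)" by (rule heis_pos_none) auto
    then show ?thesis by (simp add: hmode_def)
  qed
  have "hmode (sb \<beta>) 1 (hmode (sb \<beta>) 1 (bvec ({#(c,1), (d,1)#}, g))) b' =
     ?r * ?X * hmode (sb \<beta>) 1 (bvec ({#(d,1)#}, g)) b' + ?r * ?Y * hmode (sb \<beta>) 1 (bvec ({#(c,1)#}, g)) b'"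
    unfolding hmode_sb_1_pair
    by (subst hmode_add) (auto intro!: fin_supp_scale fin_supp_bvec simp: hmode_scale)
  also have "\<dots> = ?r * ?X * (?r * ?Y * ?e) + ?r * ?Y * (?r * ?X * ?e)"
    unfolding hmode_sb_1_single by simp
  also have "\<dots> = 4 * (?X * ?Y) * ?e" by (rule aux_sq2[OF s2])
  finally have h: "hmode (sb \<beta>) 1 (hmode (sb \<beta>) 1 (bvec ({#(c,1), (d,1)#}, g))) b' = 4 * (?X * ?Y) * ?e" .
  show "Eplus (sb \<beta>) 2 (bvec ({#(c,1), (d,1)#}, g)) b' = 2 * of_int (ip \<beta> (sr c) * ip \<beta> (sr d)) * bvec ({#}, g) b'"
    unfolding Eplus_2 z h by simp
qed



definition YS :: "(nat \<times> nat) list \<Rightarrow> int \<Rightarrow> int \<Rightarrow> nat \<Rightarrow> (int list \<times> nat \<times> nat) set" where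
  "YS xs N c B = {(ms, p, q). length ms = length xs \<and> set ms \<subseteq> {- int B..int B} \<and> p \<le> B \<and> q \<le> B
                \<and> (\<Sum>j<length xs. - (ms ! j) - int (snd (xs ! j))) + int p - int q + c = - N - 1}"

definition YT :: "(nat \<times> nat) list \<Rightarrow> lat \<Rightarrow> (nat \<times> nat) multiset \<times> lat \<Rightarrow> int list \<times> nat \<times> nat \<Rightarrow> vvec" where
  "YT xs \<beta> bw t = (case t of (ms, p, q) \<Rightarrow> \<lambda>b.
          (\<Prod>j<length xs. (of_int (- (ms ! j) - 1) :: complex) gchoose (snd (xs ! j) - 1))
          * (hprod xs ms (filter (\<lambda>j. ms ! j < 0) [0..<length xs])
               (Eminus (sb \<beta>) p (Eplus (sb \<beta>) q (shift \<beta>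
                 (hprod xs ms (filter (\<lambda>j. ms ! j \<ge> 0) [0..<length xs]) (bvec bw))))) b))"

lemma Ybas_unf: "Ybas (Mv, \<beta>) N (Mw, \<gamma>) b =
   (\<Sum>t\<in>YS (sorted_list_of_multiset Mv) N (2 * ip \<beta> \<gamma>)
        (nat (\<bar>N\<bar> + 1 + \<bar>2 * ip \<beta> \<gamma>\<bar> + 2 * int (deg Mw) + int (deg Mv))).
      YT (sorted_list_of_multiset Mv) \<beta> (Mw, \<gamma>) t b)"
  unfolding Ybas_def Let_def YS_def YT_def sb_def prod.case by (rule sum.cong[OF refl]) (auto split: prod.splits)

lemma finite_YS: "finite (YS xs N c B)"
proof -
  have "YS xs N c B \<subseteq> {ms. set ms \<subseteq> {- int B..int B} \<and> length ms = length xs} \<times> {..B} \<times> {..B}"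
    by (auto simp: YS_def)
  moreover have "finite ({ms. set ms \<subseteq> {- int B..int B} \<and> length ms = length xs} \<times> {..B} \<times> {..B})"
    by (intro finite_cartesian_product finite_lists_length_eq) auto
  ultimately show ?thesis by (rule finite_subset)
qed

lemma sum_only: assumes "finite S" "\<forall>t\<in>S. t \<noteq> t0 \<longrightarrow> F t = 0"
  shows "sum F S = (if t0 \<in> S then F t0 else 0)"
proof (cases "t0 \<in> S")
  case True
  have "sum F S = F t0 + sum F (S - {t0})" using assms(1) True by (simp add: sum.remove)
  also have "sum F (S - {t0}) = 0" using assms(2) by (intro sum.neutral) auto
  finally show ?thesis using True by simp
next
  case False
  have "sum F S = 0" using assms(2) False by (intro sum.neutral) auto
  then show ?thesis using False by simp
qed


lemma deg_empty: "deg {#} = 0" by (simp add: deg_def)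

lemma Ybas_ee_ee: "Ybas ({#}, \<beta>) N ({#}, \<gamma>) = (if 0 \<le> - N - 1 - 2 * ip \<beta> \<gamma>
    then Eminus (sb \<beta>) (nat (- N - 1 - 2 * ip \<beta> \<gamma>)) (bvec ({#}, \<lambda>k. \<gamma> k + \<beta> k)) else (\<lambda>_. 0))"
proof (rule ext)
  fix b
  let ?c = "2 * ip \<beta> \<gamma>"
  let ?B = "nat (\<bar>N\<bar> + 1 + \<bar>?c\<bar> + 2 * int (deg ({#}::(nat\<times>nat) multiset)) + int (deg ({#}::(nat\<times>nat) multiset)))"
  let ?p0 = "nat (- N - 1 - ?c)"
  let ?t0 = "([]::int list, ?p0, 0::nat)"
  let ?g = "\<lambda>k. \<gamma> k + \<beta> k"
  have YT0: "\<And>ms p q. YT [] \<beta> ({#}, \<gamma>) (ms, p, q) b = Eminus (sb \<beta>) p (Eplus (sb \<beta>) q (bvec ({#}, ?g))) b"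
    by (simp add: YT_def hprod_def shift_bvec)
  have zero: "\<forall>t\<in>YS [] N ?c ?B. t \<noteq> ?t0 \<longrightarrow> YT [] \<beta> ({#}, \<gamma>) t b = 0"
  proof (intro ballI impI)
    fix t assume t: "t \<in> YS [] N ?c ?B" "t \<noteq> ?t0"
    obtain ms p q where tt: "t = (ms, p, q)" by (cases t)
    have ms: "ms = []" and eq: "int p - int q + ?c = - N - 1" using t(1) tt by (auto simp: YS_def)
    have "q \<noteq> 0"
    proof
      assume "q = 0"
      then have "p = ?p0" using eq by simp
      then show False using t(2) tt ms \<open>q = 0\<close> by simp
    qed
    then have "Eplus (sb \<beta>) q (bvec ({#}, ?g)) = (\<lambda>_. 0)"
      by (intro Eplus_deg[OF hom_bvec]) (simp add: deg_empty)
    then show "YT [] \<beta> ({#}, \<gamma>) t b = 0" using tt YT0 by (simp add: Eminus_zero)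
  qed
  have mem: "?t0 \<in> YS [] N ?c ?B \<longleftrightarrow> 0 \<le> - N - 1 - ?c"
    by (auto simp: YS_def deg_empty)
  show "Ybas ({#}, \<beta>) N ({#}, \<gamma>) b = (if 0 \<le> - N - 1 - 2 * ip \<beta> \<gamma>
    then Eminus (sb \<beta>) (nat (- N - 1 - 2 * ip \<beta> \<gamma>)) (bvec ({#}, \<lambda>k. \<gamma> k + \<beta> k)) else (\<lambda>_. 0)) b"
    unfolding Ybas_unf sorted_list_of_multiset_empty
    using sum_only[OF finite_YS zero] mem by (simp add: YT0 Eplus_0)
qed


lemma vac_add: "(\<lambda>k. vac_lat k + \<beta> k) = \<beta>" by (simp add: vac_lat_def)
lemma sb_vac: "sb vac_lat = (\<lambda>_. 0)" by (simp add: sb_def vac_lat_def)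
lemma shift_vac: "shift vac_lat v = v" by (simp add: shift_def vac_lat_def)
lemma ip_vac: "ip \<beta> vac_lat = 0" "ip vac_lat \<beta> = 0" by (simp_all add: ip_explicit vac_lat_def)
lemma deg_pair: "deg {#(c,1), (d,1)#} = 2" by (simp add: deg_def)
lemma deg_pair': "deg {#(c, Suc 0), (d, Suc 0)#} = 2" by (simp add: deg_def)

lemma Ybas_ee_pair: "Ybas ({#}, \<beta>) 1 ({#(c,1), (d,1)#}, vac_lat) =
   (\<lambda>b'. 2 * of_int (ip \<beta> (sr c) * ip \<beta> (sr d)) * bvec ({#}, \<beta>) b')"
proof (rule ext)
  fix b
  let ?M = "{#(c,1), (d,1)#}"
  let ?B = "nat (\<bar>1\<bar> + 1 + \<bar>2 * ip \<beta> vac_lat\<bar> + 2 * int (deg ?M) + int (deg ({#}::(nat\<times>nat) multiset)))"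
  let ?t0 = "([]::int list, 0::nat, 2::nat)"
  have YT0: "\<And>ms p q. YT [] \<beta> (?M, vac_lat) (ms, p, q) b = Eminus (sb \<beta>) p (Eplus (sb \<beta>) q (bvec (?M, \<beta>))) b"
    by (simp add: YT_def hprod_def shift_bvec vac_add)
  have zero: "\<forall>t\<in>YS [] 1 (2 * ip \<beta> vac_lat) ?B. t \<noteq> ?t0 \<longrightarrow> YT [] \<beta> (?M, vac_lat) t b = 0"
  proof (intro ballI impI)
    fix t assume t: "t \<in> YS [] 1 (2 * ip \<beta> vac_lat) ?B" "t \<noteq> ?t0"
    obtain ms p q where tt: "t = (ms, p, q)" by (cases t)
    have ms: "ms = []" and eq: "int p - int q = - 2" using t(1) tt by (auto simp: YS_def ip_vac)
    have "2 < q"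
    proof (rule ccontr)
      assume "\<not> 2 < q"
      then have "p = 0" "q = 2" using eq by auto
      then show False using t(2) tt ms by simp
    qed
    then have "Eplus (sb \<beta>) q (bvec (?M, \<beta>)) = (\<lambda>_. 0)"
      by (intro Eplus_deg[OF hom_bvec]) (simp add: deg_pair deg_pair')
    then show "YT [] \<beta> (?M, vac_lat) t b = 0" using tt YT0 by (simp add: Eminus_zero)
  qed
  have mem: "?t0 \<in> YS [] 1 (2 * ip \<beta> vac_lat) ?B"
    by (simp add: YS_def deg_empty deg_pair ip_vac)
  show "Ybas ({#}, \<beta>) 1 (?M, vac_lat) b = 2 * of_int (ip \<beta> (sr c) * ip \<beta> (sr d)) * bvec ({#}, \<beta>) b"
  proof -
    have v: "YT [] \<beta> (?M, vac_lat) ?t0 b = 2 * of_int (ip \<beta> (sr c) * ip \<beta> (sr d)) * bvec ({#}, \<beta>) b"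
      unfolding YT0 Eminus_0 Eplus_sb_2_pair by simp
    show ?thesis
      unfolding Ybas_unf sorted_list_of_multiset_empty sum_only[OF finite_YS zero] if_P[OF mem] v ..
  qed
qed


lemma len2: "length ms = 2 \<Longrightarrow> \<exists>m1 m2. ms = [m1, m2]"
  by (auto simp: length_Suc_conv numeral_2_eq_2)

lemma sum2: "(\<Sum>j<(2::nat). f j) = f 0 + f 1" by (simp add: numeral_2_eq_2)
lemma prod2: "(\<Prod>j<(2::nat). f j) = f 0 * f 1" by (simp add: numeral_2_eq_2)
lemma upt2: "[0..<2] = [0::nat, 1]" by (simp add: numeral_2_eq_2)

lemma YT2: "YT [(a,1),(b,1)] vac_lat bw ([m1,m2],p,q) = (if p = 0 \<and> q = 0 then
    (if 0 \<le> m1 \<and> m2 < 0 then heis b m2 (heis a m1 (bvec bw)) else heis a m1 (heis b m2 (bvec bw)))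
    else (\<lambda>_. 0))"
proof (rule ext)
  fix b'
  have pr: "(\<Prod>j<length [(a,1),(b,1::nat)]. (of_int (- ([m1,m2] ! j) - 1) :: complex) gchoose (snd ([(a,1),(b,1::nat)] ! j) - 1)) = 1"
    by (simp add: prod2)
  have YTe: "YT [(a,1),(b,1)] vac_lat bw ([m1,m2],p,q) b' =
     hprod [(a,1),(b,1)] [m1,m2] (filter (\<lambda>j. [m1,m2] ! j < 0) [0,1])
               (Eminus (\<lambda>_. 0) p (Eplus (\<lambda>_. 0) q
                 (hprod [(a,1),(b,1)] [m1,m2] (filter (\<lambda>j. [m1,m2] ! j \<ge> 0) [0,1]) (bvec bw)))) b'"
    unfolding YT_def prod.case pr sb_vac shift_vac by (simp add: upt2)
  show "YT [(a,1),(b,1)] vac_lat bw ([m1,m2],p,q) b' = (if p = 0 \<and> q = 0 then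
    (if 0 \<le> m1 \<and> m2 < 0 then heis b m2 (heis a m1 (bvec bw)) else heis a m1 (heis b m2 (bvec bw)))
    else (\<lambda>_. 0)) b'"
  proof (cases "p = 0")
    case False
    then show ?thesis unfolding YTe by (simp add: Eminus_czero hprod_zero)
  next
    case True
    show ?thesis
    proof (cases "q = 0")
      case False
      then show ?thesis unfolding YTe by (simp add: Eplus_czero Eminus_zero hprod_zero)
    next
      case True
      then show ?thesis unfolding YTe using \<open>p = 0\<close> by (simp add: Eplus_0 Eminus_0 hprod_def)
    qed
  qed
qed

lemma heis_0_bvec': "heis a 0 (bvec (M, g)) b' = complex_of_real (sqrt 2) * of_int (ip (sr a) g) * bvec (M, g) b'"
  by (simp add: heis_0_bvec)

lemma Y2core: "(\<Sum>t\<in>YS [(a,1),(b,1)] 1 0 B. YT [(a,1),(b,1)] vac_lat ({#}, \<gamma>) t b') =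
    2 * of_int (ip (sr a) \<gamma> * ip (sr b) \<gamma>) * bvec ({#}, \<gamma>) b'"
proof -
  let ?xs = "[(a,1),(b,1::nat)]"
  let ?t0 = "([0,0]::int list, 0::nat, 0::nat)"
  have zero: "\<forall>t\<in>YS ?xs 1 0 B. t \<noteq> ?t0 \<longrightarrow> YT ?xs vac_lat ({#}, \<gamma>) t b' = 0"
  proof (intro ballI impI)
    fix t assume t: "t \<in> YS ?xs 1 0 B" "t \<noteq> ?t0"
    obtain ms p q where tt: "t = (ms, p, q)" by (cases t)
    have "length ms = 2" using t(1) tt by (simp add: YS_def)
    then obtain m1 m2 where ms: "ms = [m1, m2]" using len2 by blast
    have eq: "- m1 - 1 + (- m2 - 1) + int p - int q = - 2" using t(1) tt ms by (simp add: YS_def sum2)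
    show "YT ?xs vac_lat ({#}, \<gamma>) t b' = 0"
    proof (cases "p = 0 \<and> q = 0")
      case False then show ?thesis unfolding tt ms YT2 using False by auto
    next
      case True
      then have s: "m1 + m2 = 0" using eq by simp
      show ?thesis
      proof (cases "0 \<le> m1 \<and> m2 < 0")
        case True
        then have "0 < m1" using s by simp
        then have "heis a m1 (bvec ({#}, \<gamma>)) = (\<lambda>_. 0)" by (intro heis_pos_none) auto
        then show ?thesis unfolding tt ms YT2 using True \<open>p = 0 \<and> q = 0\<close> by (auto simp: heis_zero)
      next
        case False
        have "0 < m2"
        proof (rule ccontr)
          assume "\<not> 0 < m2"
          then have "m1 = 0" "m2 = 0" using s False by auto
          then show False using t(2) tt ms True by simp
        qed
        then have "heis b m2 (bvec ({#}, \<gamma>)) = (\<lambda>_. 0)" by (intro heis_pos_none) auto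
        then show ?thesis unfolding tt ms YT2 using False \<open>p = 0 \<and> q = 0\<close> by (auto simp: heis_zero)
      qed
    qed
  qed
  have mem: "?t0 \<in> YS ?xs 1 0 B" by (simp add: YS_def sum2)
  have v: "YT ?xs vac_lat ({#}, \<gamma>) ?t0 b' = 2 * of_int (ip (sr a) \<gamma> * ip (sr b) \<gamma>) * bvec ({#}, \<gamma>) b'"
  proof -
    have "YT ?xs vac_lat ({#}, \<gamma>) ?t0 b' = heis a 0 (heis b 0 (bvec ({#}, \<gamma>))) b'"
      unfolding YT2 by simp
    also have "\<dots> = complex_of_real (sqrt 2) * of_int (ip (sr a) \<gamma>) * (complex_of_real (sqrt 2) * of_int (ip (sr b) \<gamma>) * bvec ({#}, \<gamma>) b')"
      unfolding heis_0_bvec[of b] by (simp add: heis_scale heis_0_bvec')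
    also have "\<dots> = (complex_of_real (sqrt 2) * complex_of_real (sqrt 2)) * (of_int (ip (sr a) \<gamma>) * of_int (ip (sr b) \<gamma>)) * bvec ({#}, \<gamma>) b'"
      by (simp only: ac_simps)
    also have "\<dots> = 2 * of_int (ip (sr a) \<gamma> * ip (sr b) \<gamma>) * bvec ({#}, \<gamma>) b'"
      unfolding s2 by simp
    finally show ?thesis .
  qed
  show ?thesis unfolding sum_only[OF finite_YS zero] if_P[OF mem] v ..
qed


lemma heis_m1_single: "heis b (-1) (bvec ({#(d,1)#}, g)) = bvec ({#(b,1), (d,1)#}, g)"
  by (simp add: heis_neg_bvec)

lemmas heis_m1_single' = heis_m1_single[unfolded One_nat_def]

lemma heis_m1_after_pair: "heis b (-1) (heis a 1 (bvec ({#(c,1), (d,1)#}, g))) b' =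
   of_int (ip (sr a) (sr c)) * bvec ({#(b,1), (d,1)#}, g) b' + of_int (ip (sr a) (sr d)) * bvec ({#(b,1), (c,1)#}, g) b'"
  unfolding heis_1_pair
  by (subst heis_add) (auto intro!: fin_supp_scale fin_supp_bvec simp: heis_scale heis_m1_single heis_m1_single')

lemma Y3core: assumes "1 \<le> B"
  shows "(\<Sum>t\<in>YS [(a,1),(b,1)] 1 0 B. YT [(a,1),(b,1)] vac_lat ({#(c,1), (d,1)#}, vac_lat) t b') =
    of_int (ip (sr a) (sr c)) * bvec ({#(b,1), (d,1)#}, vac_lat) b' + of_int (ip (sr a) (sr d)) * bvec ({#(b,1), (c,1)#}, vac_lat) b'
  + of_int (ip (sr b) (sr c)) * bvec ({#(a,1), (d,1)#}, vac_lat) b' + of_int (ip (sr b) (sr d)) * bvec ({#(a,1), (c,1)#}, vac_lat) b'"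
proof -
  let ?xs = "[(a,1),(b,1::nat)]"
  let ?M = "{#(c,1), (d,1::nat)#}"
  let ?t1 = "([1,-1]::int list, 0::nat, 0::nat)"
  let ?t2 = "([-1,1]::int list, 0::nat, 0::nat)"
  let ?F = "\<lambda>t. YT ?xs vac_lat (?M, vac_lat) t b'"
  have zero: "\<forall>t\<in>YS ?xs 1 0 B - {?t1, ?t2}. ?F t = 0"
  proof (intro ballI)
    fix t assume t0: "t \<in> YS ?xs 1 0 B - {?t1, ?t2}"
    then have t: "t \<in> YS ?xs 1 0 B" "t \<noteq> ?t1" "t \<noteq> ?t2" by auto
    obtain ms p q where tt: "t = (ms, p, q)" by (cases t)
    have "length ms = 2" using t(1) tt by (simp add: YS_def)
    then obtain m1 m2 where ms: "ms = [m1, m2]" using len2 by blast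
    have eq: "- m1 - 1 + (- m2 - 1) + int p - int q = - 2" using t(1) tt ms by (simp add: YS_def sum2)
    show "?F t = 0"
    proof (cases "p = 0 \<and> q = 0")
      case False then show ?thesis unfolding tt ms YT2 using False by auto
    next
      case True
      then have s: "m1 + m2 = 0" using eq by simp
      show ?thesis
      proof (cases "0 \<le> m1 \<and> m2 < 0")
        case True
        then have "0 < m1" using s by simp
        moreover have "m1 \<noteq> 1" using t(2) tt ms s True \<open>p = 0 \<and> q = 0\<close> by auto
        ultimately have "heis a m1 (bvec (?M, vac_lat)) = (\<lambda>_. 0)" by (intro heis_pos_none) auto
        then show ?thesis unfolding tt ms YT2 using True \<open>p = 0 \<and> q = 0\<close> by (auto simp: heis_zero)
      next
        case False
        show ?thesis
        proof (cases "m2 = 0")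
          case True
          then have "m1 = 0" using s by simp
          have "heis b 0 (bvec (?M, vac_lat)) = (\<lambda>_. 0)" by (simp add: heis_0_bvec ip_vac)
          then show ?thesis unfolding tt ms YT2 using True \<open>m1 = 0\<close> \<open>p = 0 \<and> q = 0\<close> by (auto simp: heis_zero)
        next
          case False
          then have "0 < m2" using s \<open>\<not> (0 \<le> m1 \<and> m2 < 0)\<close> by auto
          moreover have "m2 \<noteq> 1" using t(3) tt ms s \<open>p = 0 \<and> q = 0\<close> by auto
          ultimately have "heis b m2 (bvec (?M, vac_lat)) = (\<lambda>_. 0)" by (intro heis_pos_none) auto
          then show ?thesis unfolding tt ms YT2 using \<open>\<not> (0 \<le> m1 \<and> m2 < 0)\<close> \<open>p = 0 \<and> q = 0\<close> by (auto simp: heis_zero)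
        qed
      qed
    qed
  qed
  have sub: "{?t1, ?t2} \<subseteq> YS ?xs 1 0 B" using assms by (simp add: YS_def sum2)
  have "(\<Sum>t\<in>YS ?xs 1 0 B. ?F t) = (\<Sum>t\<in>{?t1, ?t2}. ?F t)"
    by (rule sum.mono_neutral_right[OF finite_YS sub zero])
  also have "\<dots> = ?F ?t1 + ?F ?t2" by simp
  also have "?F ?t1 = heis b (-1) (heis a 1 (bvec (?M, vac_lat))) b'" unfolding YT2 by simp
  also have "?F ?t2 = heis a (-1) (heis b 1 (bvec (?M, vac_lat))) b'" unfolding YT2 by simp
  finally show ?thesis unfolding heis_m1_after_pair by (simp add: algebra_simps)
qed


lemma Y2core': "c = 0 \<Longrightarrow> (\<Sum>t\<in>YS [(a,1),(b,1)] 1 c B. YT [(a,1),(b,1)] vac_lat ({#}, \<gamma>) t b') =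
    2 * of_int (ip (sr a) \<gamma> * ip (sr b) \<gamma>) * bvec ({#}, \<gamma>) b'"
  using Y2core by simp

lemma Y3core': "c = 0 \<Longrightarrow> 1 \<le> B \<Longrightarrow>
    (\<Sum>t\<in>YS [(a,1),(b,1)] 1 c B. YT [(a,1),(b,1)] vac_lat ({#(c',1), (d,1)#}, vac_lat) t b') =
    of_int (ip (sr a) (sr c')) * bvec ({#(b,1), (d,1)#}, vac_lat) b' + of_int (ip (sr a) (sr d)) * bvec ({#(b,1), (c',1)#}, vac_lat) b'
  + of_int (ip (sr b) (sr c')) * bvec ({#(a,1), (d,1)#}, vac_lat) b' + of_int (ip (sr b) (sr d)) * bvec ({#(a,1), (c',1)#}, vac_lat) b'"
  using Y3core by simp

lemma sl_pair1: "(a,1) \<le> (b,1::nat) \<Longrightarrow> sorted_list_of_multiset {#(a,1), (b,1::nat)#} = [(a,1), (b,1)]"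
  by simp
lemma sl_pair2: "\<not> (a,1) \<le> (b,1::nat) \<Longrightarrow> sorted_list_of_multiset {#(a,1), (b,1::nat)#} = [(b,1), (a,1)]"
  by simp

lemma Ybas_pair_ee: "Ybas ({#(a,1), (b,1)#}, vac_lat) 1 ({#}, \<gamma>) =
   (\<lambda>b'. 2 * of_int (ip (sr a) \<gamma> * ip (sr b) \<gamma>) * bvec ({#}, \<gamma>) b')"
proof (rule ext)
  fix b'
  show "Ybas ({#(a,1), (b,1)#}, vac_lat) 1 ({#}, \<gamma>) b' = 2 * of_int (ip (sr a) \<gamma> * ip (sr b) \<gamma>) * bvec ({#}, \<gamma>) b'"
  proof (cases "(a,1) \<le> (b,1::nat)")
    case True
    show ?thesis unfolding Ybas_unf sl_pair1[OF True] by (subst Y2core') (simp_all add: ip_vac)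
  next
    case False
    show ?thesis unfolding Ybas_unf sl_pair2[OF False] by (subst Y2core') (simp_all add: ip_vac)
  qed
qed

lemma Ybas_pair_pair: "Ybas ({#(a,1), (b,1)#}, vac_lat) 1 ({#(c,1), (d,1)#}, vac_lat) =
   (\<lambda>b'. of_int (ip (sr a) (sr c)) * bvec ({#(b,1), (d,1)#}, vac_lat) b' + of_int (ip (sr a) (sr d)) * bvec ({#(b,1), (c,1)#}, vac_lat) b'
  + of_int (ip (sr b) (sr c)) * bvec ({#(a,1), (d,1)#}, vac_lat) b' + of_int (ip (sr b) (sr d)) * bvec ({#(a,1), (c,1)#}, vac_lat) b')"
proof (rule ext)
  fix b'
  show "Ybas ({#(a,1), (b,1)#}, vac_lat) 1 ({#(c,1), (d,1)#}, vac_lat) b' =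
    of_int (ip (sr a) (sr c)) * bvec ({#(b,1), (d,1)#}, vac_lat) b' + of_int (ip (sr a) (sr d)) * bvec ({#(b,1), (c,1)#}, vac_lat) b'
  + of_int (ip (sr b) (sr c)) * bvec ({#(a,1), (d,1)#}, vac_lat) b' + of_int (ip (sr b) (sr d)) * bvec ({#(a,1), (c,1)#}, vac_lat) b'"
  proof (cases "(a,1) \<le> (b,1::nat)")
    case True
    show ?thesis unfolding Ybas_unf sl_pair1[OF True] by (subst Y3core') (simp_all add: ip_vac)
  next
    case False
    show ?thesis unfolding Ybas_unf sl_pair2[OF False] by (subst Y3core') (simp_all add: ip_vac algebra_simps)
  qed
qed



lemma Ymode_core: assumes "finite A" "supp v \<subseteq> A" "finite B" "supp w \<subseteq> B"
  shows "Ymode v N w b = (\<Sum>bv\<in>A. \<Sum>bw\<in>B. v bv * w bw * Ybas bv N bw b)"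
proof -
  have fv: "finite (supp v)" and fw: "finite (supp w)" using assms finite_subset by auto
  have "Ymode v N w b = (\<Sum>bv\<in>supp v. \<Sum>bw\<in>B. v bv * w bw * Ybas bv N bw b)"
    unfolding Ymode_def
  proof (rule sum.cong[OF refl])
    fix bv show "(\<Sum>bw\<in>supp w. v bv * w bw * Ybas bv N bw b) = (\<Sum>bw\<in>B. v bv * w bw * Ybas bv N bw b)"
      by (rule sum.mono_neutral_left) (use assms in \<open>auto simp: supp_def\<close>)
  qed
  also have "\<dots> = (\<Sum>bv\<in>A. \<Sum>bw\<in>B. v bv * w bw * Ybas bv N bw b)"
    by (rule sum.mono_neutral_left) (use assms in \<open>auto simp: supp_def\<close>)
  finally show ?thesis .
qed

lemma Ymode_add_right: assumes "finite (supp v)" "finite (supp f)" "finite (supp g)"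
  shows "Ymode v N (\<lambda>bb. f bb + g bb) b = Ymode v N f b + Ymode v N g b"
proof -
  let ?B = "supp f \<union> supp g"
  have s: "supp (\<lambda>bb. f bb + g bb) \<subseteq> ?B" "supp f \<subseteq> ?B" "supp g \<subseteq> ?B" by (auto simp: supp_def)
  have fB: "finite ?B" using assms by simp
  show ?thesis
    unfolding Ymode_core[OF assms(1) order_refl fB s(1)] Ymode_core[OF assms(1) order_refl fB s(2)]
      Ymode_core[OF assms(1) order_refl fB s(3)]
    by (simp add: algebra_simps sum.distrib)
qed

lemma Ymode_scale_right: assumes "finite (supp v)" "finite (supp f)"
  shows "Ymode v N (\<lambda>bb. c * f bb) b = c * Ymode v N f b"
proof -
  have s: "supp (\<lambda>bb. c * f bb) \<subseteq> supp f" by (auto simp: supp_def)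
  show ?thesis
    unfolding Ymode_core[OF assms(1) order_refl assms(2) s] Ymode_core[OF assms(1) order_refl assms(2) order_refl]
    by (simp add: sum_distrib_left algebra_simps)
qed

lemma Ymode_sum_right: assumes "finite (supp v)" "finite K" "\<forall>k\<in>K. finite (supp (f k))"
  shows "Ymode v N (\<lambda>bb. \<Sum>k\<in>K. f k bb) b = (\<Sum>k\<in>K. Ymode v N (f k) b)"
proof -
  let ?B = "\<Union>k\<in>K. supp (f k)"
  have fB: "finite ?B" using assms by auto
  have s: "supp (\<lambda>bb. \<Sum>k\<in>K. f k bb) \<subseteq> ?B"
  proof
    fix b assume "b \<in> supp (\<lambda>bb. \<Sum>k\<in>K. f k bb)"
    then have "(\<Sum>k\<in>K. f k b) \<noteq> 0" by (simp add: supp_def)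
    then obtain k where "k \<in> K" "f k b \<noteq> 0" by (rule sum.not_neutral_contains_not_neutral)
    then show "b \<in> ?B" by (auto simp: supp_def)
  qed
  have sk: "\<And>k. k \<in> K \<Longrightarrow> supp (f k) \<subseteq> ?B" by auto
  have "Ymode v N (\<lambda>bb. \<Sum>k\<in>K. f k bb) b = (\<Sum>bv\<in>supp v. \<Sum>bw\<in>?B. v bv * (\<Sum>k\<in>K. f k bw) * Ybas bv N bw b)"
    by (rule Ymode_core[OF assms(1) order_refl fB s])
  also have "\<dots> = (\<Sum>k\<in>K. \<Sum>bv\<in>supp v. \<Sum>bw\<in>?B. v bv * f k bw * Ybas bv N bw b)"
    by (simp add: sum_distrib_left sum_distrib_right sum.swap[of _ K] algebra_simps)
  also have "\<dots> = (\<Sum>k\<in>K. Ymode v N (f k) b)"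
    by (rule sum.cong[OF refl]) (simp add: Ymode_core[OF assms(1) order_refl fB sk])
  finally show ?thesis .
qed

lemma Ymode_add_left: assumes "finite (supp w)" "finite (supp f)" "finite (supp g)"
  shows "Ymode (\<lambda>bb. f bb + g bb) N w b = Ymode f N w b + Ymode g N w b"
proof -
  let ?A = "supp f \<union> supp g"
  have s: "supp (\<lambda>bb. f bb + g bb) \<subseteq> ?A" "supp f \<subseteq> ?A" "supp g \<subseteq> ?A" by (auto simp: supp_def)
  have fA: "finite ?A" using assms by simp
  show ?thesis
    unfolding Ymode_core[OF fA s(1) assms(1) order_refl] Ymode_core[OF fA s(2) assms(1) order_refl]
      Ymode_core[OF fA s(3) assms(1) order_refl]
    by (simp add: algebra_simps sum.distrib)
qed

lemma Ymode_scale_left: assumes "finite (supp w)" "finite (supp f)"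
  shows "Ymode (\<lambda>bb. c * f bb) N w b = c * Ymode f N w b"
proof -
  have s: "supp (\<lambda>bb. c * f bb) \<subseteq> supp f" by (auto simp: supp_def)
  show ?thesis
    unfolding Ymode_core[OF assms(2) s assms(1) order_refl] Ymode_core[OF assms(2) order_refl assms(1) order_refl]
    by (simp add: sum_distrib_left algebra_simps)
qed

lemma Ymode_sum_left: assumes "finite (supp w)" "finite K" "\<forall>k\<in>K. finite (supp (f k))"
  shows "Ymode (\<lambda>bb. \<Sum>k\<in>K. f k bb) N w b = (\<Sum>k\<in>K. Ymode (f k) N w b)"
proof -
  let ?A = "\<Union>k\<in>K. supp (f k)"
  have fA: "finite ?A" using assms by auto
  have s: "supp (\<lambda>bb. \<Sum>k\<in>K. f k bb) \<subseteq> ?A"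
  proof
    fix b assume "b \<in> supp (\<lambda>bb. \<Sum>k\<in>K. f k bb)"
    then have "(\<Sum>k\<in>K. f k b) \<noteq> 0" by (simp add: supp_def)
    then obtain k where "k \<in> K" "f k b \<noteq> 0" by (rule sum.not_neutral_contains_not_neutral)
    then show "b \<in> ?A" by (auto simp: supp_def)
  qed
  have sk: "\<And>k. k \<in> K \<Longrightarrow> supp (f k) \<subseteq> ?A" by auto
  have "Ymode (\<lambda>bb. \<Sum>k\<in>K. f k bb) N w b = (\<Sum>bv\<in>?A. \<Sum>bw\<in>supp w. (\<Sum>k\<in>K. f k bv) * w bw * Ybas bv N bw b)"
    by (rule Ymode_core[OF fA s assms(1) order_refl])
  also have "\<dots> = (\<Sum>k\<in>K. \<Sum>bv\<in>?A. \<Sum>bw\<in>supp w. f k bv * w bw * Ybas bv N bw b)"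
    by (simp add: sum_distrib_left sum_distrib_right sum.swap[of _ K] algebra_simps)
  also have "\<dots> = (\<Sum>k\<in>K. Ymode (f k) N w b)"
    by (rule sum.cong[OF refl]) (simp add: Ymode_core[OF fA sk assms(1) order_refl])
  finally show ?thesis .
qed

lemma Ymode_bvec_bvec: "Ymode (bvec bv) N (bvec bw) b = Ybas bv N bw b"
  unfolding Ymode_def supp_bvec by (simp add: bvec_def)

lemma Ymode_zero_left: "Ymode (\<lambda>_. 0) N w b = 0"
  by (simp add: Ymode_def supp_def)



definition Hl :: "int list list" where
  "Hl = [[2,3,4,5,6,4,2,3],[3,6,8,10,12,8,4,6],[4,8,12,15,18,12,6,9],[5,10,15,20,24,16,8,12],
         [6,12,18,24,30,20,10,15],[4,8,12,16,20,14,7,10],[2,4,6,8,10,7,4,5],[3,6,9,12,15,10,5,8]]"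

definition Hi :: "nat \<Rightarrow> nat \<Rightarrow> int" where
  "Hi a b = (if a \<in> {1..8} \<and> b \<in> {1..8} then Hl ! (a - 1) ! (b - 1) else 0)"

lemma in8: "a \<in> {1..8::nat} \<longleftrightarrow> a = 1 \<or> a = 2 \<or> a = 3 \<or> a = 4 \<or> a = 5 \<or> a = 6 \<or> a = 7 \<or> a = 8"
  by auto

lemma GH_1: "b \<in> {1..8} \<Longrightarrow> (\<Sum>c\<in>{1..8}. gram 1 c * Hi c b) = (if 1 = b then 1 else 0)"
  unfolding in8 sum8 gram_row by (elim disjE) (simp_all add: Hi_def Hl_def)
lemma HG_1: "b \<in> {1..8} \<Longrightarrow> (\<Sum>c\<in>{1..8}. Hi 1 c * gram c b) = (if 1 = b then 1 else 0)"
  unfolding in8 sum8 gram_row by (elim disjE) (simp_all add: Hi_def Hl_def)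

lemma GH_2: "b \<in> {1..8} \<Longrightarrow> (\<Sum>c\<in>{1..8}. gram 2 c * Hi c b) = (if 2 = b then 1 else 0)"
  unfolding in8 sum8 gram_row by (elim disjE) (simp_all add: Hi_def Hl_def)
lemma HG_2: "b \<in> {1..8} \<Longrightarrow> (\<Sum>c\<in>{1..8}. Hi 2 c * gram c b) = (if 2 = b then 1 else 0)"
  unfolding in8 sum8 gram_row by (elim disjE) (simp_all add: Hi_def Hl_def)

lemma GH_3: "b \<in> {1..8} \<Longrightarrow> (\<Sum>c\<in>{1..8}. gram 3 c * Hi c b) = (if 3 = b then 1 else 0)"
  unfolding in8 sum8 gram_row by (elim disjE) (simp_all add: Hi_def Hl_def)
lemma HG_3: "b \<in> {1..8} \<Longrightarrow> (\<Sum>c\<in>{1..8}. Hi 3 c * gram c b) = (if 3 = b then 1 else 0)"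
  unfolding in8 sum8 gram_row by (elim disjE) (simp_all add: Hi_def Hl_def)

lemma GH_4: "b \<in> {1..8} \<Longrightarrow> (\<Sum>c\<in>{1..8}. gram 4 c * Hi c b) = (if 4 = b then 1 else 0)"
  unfolding in8 sum8 gram_row by (elim disjE) (simp_all add: Hi_def Hl_def)
lemma HG_4: "b \<in> {1..8} \<Longrightarrow> (\<Sum>c\<in>{1..8}. Hi 4 c * gram c b) = (if 4 = b then 1 else 0)"
  unfolding in8 sum8 gram_row by (elim disjE) (simp_all add: Hi_def Hl_def)

lemma GH_5: "b \<in> {1..8} \<Longrightarrow> (\<Sum>c\<in>{1..8}. gram 5 c * Hi c b) = (if 5 = b then 1 else 0)"
  unfolding in8 sum8 gram_row by (elim disjE) (simp_all add: Hi_def Hl_def)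
lemma HG_5: "b \<in> {1..8} \<Longrightarrow> (\<Sum>c\<in>{1..8}. Hi 5 c * gram c b) = (if 5 = b then 1 else 0)"
  unfolding in8 sum8 gram_row by (elim disjE) (simp_all add: Hi_def Hl_def)

lemma GH_6: "b \<in> {1..8} \<Longrightarrow> (\<Sum>c\<in>{1..8}. gram 6 c * Hi c b) = (if 6 = b then 1 else 0)"
  unfolding in8 sum8 gram_row by (elim disjE) (simp_all add: Hi_def Hl_def)
lemma HG_6: "b \<in> {1..8} \<Longrightarrow> (\<Sum>c\<in>{1..8}. Hi 6 c * gram c b) = (if 6 = b then 1 else 0)"
  unfolding in8 sum8 gram_row by (elim disjE) (simp_all add: Hi_def Hl_def)

lemma GH_7: "b \<in> {1..8} \<Longrightarrow> (\<Sum>c\<in>{1..8}. gram 7 c * Hi c b) = (if 7 = b then 1 else 0)"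
  unfolding in8 sum8 gram_row by (elim disjE) (simp_all add: Hi_def Hl_def)
lemma HG_7: "b \<in> {1..8} \<Longrightarrow> (\<Sum>c\<in>{1..8}. Hi 7 c * gram c b) = (if 7 = b then 1 else 0)"
  unfolding in8 sum8 gram_row by (elim disjE) (simp_all add: Hi_def Hl_def)

lemma GH_8: "b \<in> {1..8} \<Longrightarrow> (\<Sum>c\<in>{1..8}. gram 8 c * Hi c b) = (if 8 = b then 1 else 0)"
  unfolding in8 sum8 gram_row by (elim disjE) (simp_all add: Hi_def Hl_def)
lemma HG_8: "b \<in> {1..8} \<Longrightarrow> (\<Sum>c\<in>{1..8}. Hi 8 c * gram c b) = (if 8 = b then 1 else 0)"
  unfolding in8 sum8 gram_row by (elim disjE) (simp_all add: Hi_def Hl_def)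

lemma GH_int: assumes "a \<in> {1..8}" "b \<in> {1..8}" shows "(\<Sum>c\<in>{1..8}. gram a c * Hi c b) = (if a = b then 1 else 0)"
  using assms(1) GH_1[OF assms(2)] GH_2[OF assms(2)] GH_3[OF assms(2)] GH_4[OF assms(2)] GH_5[OF assms(2)] GH_6[OF assms(2)] GH_7[OF assms(2)] GH_8[OF assms(2)] unfolding in8 by (elim disjE) simp_all

lemma HG_int: assumes "a \<in> {1..8}" "b \<in> {1..8}" shows "(\<Sum>c\<in>{1..8}. Hi a c * gram c b) = (if a = b then 1 else 0)"
  using assms(1) HG_1[OF assms(2)] HG_2[OF assms(2)] HG_3[OF assms(2)] HG_4[OF assms(2)] HG_5[OF assms(2)] HG_6[OF assms(2)] HG_7[OF assms(2)] HG_8[OF assms(2)] unfolding in8 by (elim disjE) simp_all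

lemma Hi_sym: "Hi a b = Hi b a"
  unfolding Hi_def
proof (cases "a \<in> {1..8} \<and> b \<in> {1..8}")
  case True
  then show "(if a \<in> {1..8} \<and> b \<in> {1..8} then Hl ! (a - 1) ! (b - 1) else 0) =
    (if b \<in> {1..8} \<and> a \<in> {1..8} then Hl ! (b - 1) ! (a - 1) else 0)"
    unfolding in8 by (elim conjE disjE) (simp_all add: Hl_def)
qed auto


lemma sum_delta8: assumes "a \<in> {1..8}" shows "(\<Sum>e\<in>{1..8::nat}. (if a = e then 1 else 0) * f e) = (f a :: complex)"
proof -
  have "(\<Sum>e\<in>{1..8::nat}. (if a = e then 1 else 0) * f e) = (\<Sum>e\<in>{1..8::nat}. if a = e then f e else 0)"
    by (rule sum.cong) auto
  also have "\<dots> = f a" by (subst sum.delta'[OF finite_atLeastAtMost]) (use assms in simp)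
  finally show ?thesis .
qed

lemma sum_delta8': assumes "a \<in> {1..8}" shows "(\<Sum>e\<in>{1..8::nat}. f e * (if e = a then 1 else 0)) = (f a :: complex)"
proof -
  have "(\<Sum>e\<in>{1..8::nat}. f e * (if e = a then 1 else 0)) = (\<Sum>e\<in>{1..8::nat}. if e = a then f e else 0)"
    by (rule sum.cong) auto
  also have "\<dots> = f a" by (subst sum.delta[OF finite_atLeastAtMost]) (use assms in simp)
  finally show ?thesis .
qed

lemma Hc_prop: "(\<forall>a\<in>{1..8}. \<forall>b\<in>{1..8}. (\<Sum>c = 1..8. of_int (gram a c) * (of_int (Hi c b) :: complex)) = (if a = b then 1 else 0)) \<and>
    (\<forall>a b. a \<notin> {1..8} \<or> b \<notin> {1..8} \<longrightarrow> (of_int (Hi a b) :: complex) = 0)"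
proof (intro conjI ballI allI impI)
  fix a b :: nat assume ab: "a \<in> {1..8}" "b \<in> {1..8}"
  have "(\<Sum>c = 1..8. of_int (gram a c) * (of_int (Hi c b) :: complex)) = of_int (\<Sum>c = 1..8. gram a c * Hi c b)"
    by simp
  also have "\<dots> = (if a = b then 1 else 0)" using GH_int[OF ab] by simp
  finally show "(\<Sum>c = 1..8. of_int (gram a c) * (of_int (Hi c b) :: complex)) = (if a = b then 1 else 0)" .
next
  fix a b :: nat assume "a \<notin> {1..8} \<or> b \<notin> {1..8}"
  then show "(of_int (Hi a b) :: complex) = 0" by (auto simp: Hi_def)
qed

lemma cartan_inv_eq: "cartan_inv = (\<lambda>a b. of_int (Hi a b))"
  unfolding cartan_inv_def
proof (rule the_equality)
  show "(\<forall>a\<in>{1..8}. \<forall>b\<in>{1..8}. (\<Sum>c = 1..8. of_int (gram a c) * (of_int (Hi c b) :: complex)) = (if a = b then 1 else 0)) \<and>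
    (\<forall>a b. a \<notin> {1..8} \<or> b \<notin> {1..8} \<longrightarrow> (of_int (Hi a b) :: complex) = 0)"
    by (rule Hc_prop)
next
  fix X :: "nat \<Rightarrow> nat \<Rightarrow> complex"
  assume X: "(\<forall>a\<in>{1..8}. \<forall>b\<in>{1..8}. (\<Sum>c = 1..8. of_int (gram a c) * X c b) = (if a = b then 1 else 0)) \<and>
    (\<forall>a b. a \<notin> {1..8} \<or> b \<notin> {1..8} \<longrightarrow> X a b = 0)"
  show "X = (\<lambda>a b. of_int (Hi a b))"
  proof (intro ext)
    fix a b :: nat
    show "X a b = of_int (Hi a b)"
    proof (cases "a \<in> {1..8} \<and> b \<in> {1..8}")
      case False then show ?thesis using X by (auto simp: Hi_def)
    next
      case True
      then have a: "a \<in> {1..8}" and b: "b \<in> {1..8}" by auto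
      have "X a b = (\<Sum>e\<in>{1..8}. (if a = e then 1 else 0) * X e b)" using sum_delta8[OF a] by simp
      also have "\<dots> = (\<Sum>e\<in>{1..8}. (\<Sum>c\<in>{1..8}. of_int (Hi a c) * of_int (gram c e)) * X e b)"
        by (rule sum.cong[OF refl]) (use HG_int[OF a] in \<open>simp flip: of_int_mult of_int_sum\<close>)
      also have "\<dots> = (\<Sum>c\<in>{1..8}. \<Sum>e\<in>{1..8}. of_int (Hi a c) * (of_int (gram c e) * X e b))"
        by (simp add: sum_distrib_right mult.assoc) (rule sum.swap)
      also have "\<dots> = (\<Sum>c\<in>{1..8}. of_int (Hi a c) * (\<Sum>e\<in>{1..8}. of_int (gram c e) * X e b))"
        by (simp add: sum_distrib_left)
      also have "\<dots> = (\<Sum>c\<in>{1..8}. of_int (Hi a c) * (if c = b then 1 else 0))"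
        by (rule sum.cong[OF refl]) (use X b in auto)
      also have "\<dots> = of_int (Hi a b)" by (rule sum_delta8'[OF b])
      finally show ?thesis .
    qed
  qed
qed

lemma ip_sr_row: assumes "a \<in> {1..8}" shows "ip (sr a) y = (\<Sum>b\<in>{1..8}. gram a b * y b)"
proof -
  have "ip (sr a) y = (\<Sum>a'\<in>{1..8}. if a' = a then (\<Sum>b\<in>{1..8}. gram a' b * y b) else 0)"
    unfolding ip_def
  proof (rule sum.cong[OF refl])
    fix a' assume "a' \<in> {1..8::nat}"
    show "(\<Sum>b = 1..8. sr a a' * gram a' b * y b) = (if a' = a then \<Sum>b\<in>{1..8}. gram a' b * y b else 0)"
      using assms by (simp add: sr_pos)
  qed
  also have "\<dots> = (\<Sum>b\<in>{1..8}. gram a b * y b)" using assms by (simp add: sum.delta')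
  finally show ?thesis .
qed

lemma ip_sr_sr: assumes "a \<in> {1..8}" "c \<in> {1..8}" shows "ip (sr a) (sr c) = gram a c"
proof -
  have "ip (sr a) (sr c) = (\<Sum>b\<in>{1..8}. gram a b * (if b = c then 1 else 0))"
    unfolding ip_sr_row[OF assms(1)] using assms(2) by (intro sum.cong) (auto simp: sr_pos)
  also have "\<dots> = gram a c" using assms(2) by (simp add: if_distrib sum.delta' cong: if_cong)
  finally show ?thesis .
qed

lemma gram_sym: "gram a b = gram b a" by (auto simp: gram_def)

lemma Kc: assumes "a \<in> {1..8}" "d \<in> {1..8}"
  shows "(\<Sum>c\<in>{1..8}. of_int (ip (sr a) (sr c)) * cartan_inv c d) = (if a = d then 1 else 0)"
proof -
  have "(\<Sum>c\<in>{1..8}. of_int (ip (sr a) (sr c)) * cartan_inv c d) = (\<Sum>c\<in>{1..8}. of_int (gram a c * Hi c d))"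
  proof (rule sum.cong[OF refl])
    fix c assume c: "c \<in> {1..8::nat}"
    show "of_int (ip (sr a) (sr c)) * cartan_inv c d = of_int (gram a c * Hi c d)"
      using ip_sr_sr[OF assms(1) c] by (simp add: cartan_inv_eq)
  qed
  also have "\<dots> = of_int (\<Sum>c\<in>{1..8}. gram a c * Hi c d)" by (simp only: of_int_sum)
  finally have "(\<Sum>c\<in>{1..8}. of_int (ip (sr a) (sr c)) * cartan_inv c d) = of_int (\<Sum>c\<in>{1..8}. gram a c * Hi c d)" .
  then show ?thesis by (simp only: GH_int[OF assms]) simp
qed

lemma Kd: assumes "a \<in> {1..8}" "c \<in> {1..8}"
  shows "(\<Sum>d\<in>{1..8}. cartan_inv c d * of_int (ip (sr a) (sr d))) = (if c = a then 1 else 0)"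
proof -
  have "(\<Sum>d\<in>{1..8}. cartan_inv c d * of_int (ip (sr a) (sr d))) = (\<Sum>d\<in>{1..8}. of_int (Hi c d * gram d a))"
  proof (rule sum.cong[OF refl])
    fix d assume d: "d \<in> {1..8::nat}"
    show "cartan_inv c d * of_int (ip (sr a) (sr d)) = of_int (Hi c d * gram d a)"
      using ip_sr_sr[OF assms(1) d] gram_sym[of a d] by (simp add: cartan_inv_eq)
  qed
  also have "\<dots> = of_int (\<Sum>d\<in>{1..8}. Hi c d * gram d a)" by (simp only: of_int_sum)
  finally have "(\<Sum>d\<in>{1..8}. cartan_inv c d * of_int (ip (sr a) (sr d))) = of_int (\<Sum>d\<in>{1..8}. Hi c d * gram d a)" .
  then show ?thesis by (simp only: HG_int[OF assms(2) assms(1)]) simp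
qed



lemma fin_comb1: "finite K \<Longrightarrow> finite (supp (\<lambda>bb. \<Sum>k\<in>K. c k * bvec (g k) bb))"
  by (rule fin_supp_sum) (auto intro: fin_supp_scale fin_supp_bvec)

lemma fin_comb2: "finite K \<Longrightarrow> finite L \<Longrightarrow> finite (supp (\<lambda>bb. \<Sum>k\<in>K. \<Sum>l\<in>L. c k l * bvec (g k l) bb))"
  by (rule fin_supp_sum) (auto intro: fin_comb1)

lemma Ymode_comb1_right: assumes "finite (supp v)" "finite K"
  shows "Ymode v N (\<lambda>bb. \<Sum>k\<in>K. c k * bvec (g k) bb) b = (\<Sum>k\<in>K. c k * Ymode v N (bvec (g k)) b)"
  by (subst Ymode_sum_right) (auto intro: fin_supp_scale fin_supp_bvec simp: assms Ymode_scale_right fin_supp_bvec)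

lemma Ymode_comb2_right: assumes "finite (supp v)" "finite K" "finite L"
  shows "Ymode v N (\<lambda>bb. \<Sum>k\<in>K. \<Sum>l\<in>L. c k l * bvec (g k l) bb) b = (\<Sum>k\<in>K. \<Sum>l\<in>L. c k l * Ymode v N (bvec (g k l)) b)"
  by (subst Ymode_sum_right) (auto intro: fin_comb1 simp: assms Ymode_comb1_right)

lemma Ymode_comb1_left: assumes "finite (supp w)" "finite K"
  shows "Ymode (\<lambda>bb. \<Sum>k\<in>K. c k * bvec (g k) bb) N w b = (\<Sum>k\<in>K. c k * Ymode (bvec (g k)) N w b)"
  by (subst Ymode_sum_left) (auto intro: fin_supp_scale fin_supp_bvec simp: assms Ymode_scale_left fin_supp_bvec)

lemma Ymode_comb2_left: assumes "finite (supp w)" "finite K" "finite L"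
  shows "Ymode (\<lambda>bb. \<Sum>k\<in>K. \<Sum>l\<in>L. c k l * bvec (g k l) bb) N w b = (\<Sum>k\<in>K. \<Sum>l\<in>L. c k l * Ymode (bvec (g k l)) N w b)"
  by (subst Ymode_sum_left) (auto intro: fin_comb1 simp: assms Ymode_comb1_left)

lemma omega_alt: "omega = (\<lambda>bb. \<Sum>c\<in>{1..8}. \<Sum>d\<in>{1..8}. (cartan_inv c d / 2) * bvec ({#(c,1), (d,1)#}, vac_lat) bb)"
  unfolding omega_def by (rule ext) (simp add: sum_distrib_left)

lemma fin_omega: "finite (supp omega)" unfolding omega_alt by (rule fin_comb2) auto

lemma hh_alt: "hh x = (\<lambda>bb. \<Sum>a\<in>{1..8}. \<Sum>b\<in>{1..8}. of_int (x a * x b) * bvec ({#(a,1), (b,1)#}, vac_lat) bb)"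
  unfolding hh_def ..

lemma fin_hh: "finite (supp (hh x))" unfolding hh_alt by (rule fin_comb2) auto

lemma fin_ee: "finite (supp (ee x))" unfolding ee_def by (rule fin_supp_bvec)

lemma KcF: assumes "a \<in> {1..8}"
  shows "(\<Sum>c\<in>{1..8}. \<Sum>d\<in>{1..8}. cartan_inv c d * (of_int (ip (sr a) (sr c)) * F d)) = (F a :: complex)"
proof -
  have "(\<Sum>c\<in>{1..8}. \<Sum>d\<in>{1..8}. cartan_inv c d * (of_int (ip (sr a) (sr c)) * F d))
      = (\<Sum>d\<in>{1..8}. \<Sum>c\<in>{1..8}. of_int (ip (sr a) (sr c)) * cartan_inv c d * F d)"
    by (subst sum.swap) (simp add: algebra_simps)
  also have "\<dots> = (\<Sum>d\<in>{1..8}. (\<Sum>c\<in>{1..8}. of_int (ip (sr a) (sr c)) * cartan_inv c d) * F d)"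
    by (simp add: sum_distrib_right)
  also have "\<dots> = (\<Sum>d\<in>{1..8}. (if a = d then 1 else 0) * F d)"
  proof (rule sum.cong[OF refl])
    fix d assume d: "d \<in> {1..8::nat}"
    show "(\<Sum>c\<in>{1..8}. of_int (ip (sr a) (sr c)) * cartan_inv c d) * F d = (if a = d then 1 else 0) * F d"
      using Kc[OF assms d] by simp
  qed
  also have "\<dots> = F a" by (rule sum_delta8[OF assms])
  finally show ?thesis .
qed

lemma KdF: assumes "a \<in> {1..8}"
  shows "(\<Sum>c\<in>{1..8}. \<Sum>d\<in>{1..8}. cartan_inv c d * (of_int (ip (sr a) (sr d)) * F c)) = (F a :: complex)"
proof -
  have "(\<Sum>c\<in>{1..8}. \<Sum>d\<in>{1..8}. cartan_inv c d * (of_int (ip (sr a) (sr d)) * F c))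
      = (\<Sum>c\<in>{1..8}. (\<Sum>d\<in>{1..8}. cartan_inv c d * of_int (ip (sr a) (sr d))) * F c)"
    by (rule sum.cong[OF refl]) (simp add: sum_distrib_right mult.assoc)
  also have "\<dots> = (\<Sum>c\<in>{1..8}. F c * (if c = a then 1 else 0))"
  proof (rule sum.cong[OF refl])
    fix c assume c: "c \<in> {1..8::nat}"
    show "(\<Sum>d\<in>{1..8}. cartan_inv c d * of_int (ip (sr a) (sr d))) * F c = F c * (if c = a then 1 else 0)"
      using Kd[OF assms c] by simp
  qed
  also have "\<dots> = F a" by (rule sum_delta8'[OF assms])
  finally show ?thesis .
qed

lemma mm_comm: "bvec ({#(b,1), (a,1)#}, g) = bvec ({#(a,1), (b,1)#}, g)"
  by (simp add: add_mset_commute)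

lemma W1: assumes "a \<in> {1..8}" "b \<in> {1..8}"
  shows "Ymode (bvec ({#(a,1), (b,1)#}, vac_lat)) 1 omega b' = 2 * bvec ({#(a,1), (b,1)#}, vac_lat) b'"
proof -
  let ?B = "\<lambda>x y. bvec ({#(x,1), (y,1)#}, vac_lat) b'"
  have "Ymode (bvec ({#(a,1), (b,1)#}, vac_lat)) 1 omega b' =
     (\<Sum>c\<in>{1..8}. \<Sum>d\<in>{1..8}. (cartan_inv c d / 2) * Ybas ({#(a,1), (b,1)#}, vac_lat) 1 ({#(c,1), (d,1)#}, vac_lat) b')"
    unfolding omega_alt by (subst Ymode_comb2_right) (simp_all add: fin_supp_bvec Ymode_bvec_bvec)
  also have "\<dots> = (1/2) * ((\<Sum>c\<in>{1..8}. \<Sum>d\<in>{1..8}. cartan_inv c d * (of_int (ip (sr a) (sr c)) * ?B b d))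
     + (\<Sum>c\<in>{1..8}. \<Sum>d\<in>{1..8}. cartan_inv c d * (of_int (ip (sr a) (sr d)) * ?B b c))
     + (\<Sum>c\<in>{1..8}. \<Sum>d\<in>{1..8}. cartan_inv c d * (of_int (ip (sr b) (sr c)) * ?B a d))
     + (\<Sum>c\<in>{1..8}. \<Sum>d\<in>{1..8}. cartan_inv c d * (of_int (ip (sr b) (sr d)) * ?B a c)))"
    unfolding Ybas_pair_pair by (simp add: sum.distrib sum_distrib_left algebra_simps)
  also have "\<dots> = (1/2) * (?B b a + ?B b a + ?B a b + ?B a b)"
    by (simp only: KcF[OF assms(1)] KdF[OF assms(1)] KcF[OF assms(2)] KdF[OF assms(2)])
  also have "\<dots> = 2 * ?B a b" unfolding mm_comm[of b a] by simp
  finally show ?thesis .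
qed

lemma sum_swap3: "(\<Sum>a\<in>A. \<Sum>c\<in>C. \<Sum>d\<in>D. f a c d) = (\<Sum>c\<in>C. \<Sum>d\<in>D. \<Sum>a\<in>A. f a c d)"
  by (subst sum.swap) (rule sum.cong[OF refl], rule sum.swap)

lemma ipipH: "(\<Sum>c\<in>{1..8}. \<Sum>d\<in>{1..8}. cartan_inv c d * (of_int (ip \<beta> (sr c)) * of_int (ip \<beta> (sr d)))) = (of_int (ip \<beta> \<beta>) :: complex)"
proof -
  have "(\<Sum>c\<in>{1..8}. \<Sum>d\<in>{1..8}. cartan_inv c d * (of_int (ip \<beta> (sr c)) * of_int (ip \<beta> (sr d))))
    = (\<Sum>c\<in>{1..8}. \<Sum>d\<in>{1..8}. cartan_inv c d * ((\<Sum>a\<in>{1..8}. of_int (\<beta> a) * of_int (ip (sr a) (sr c))) * of_int (ip \<beta> (sr d))))"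
    by (simp only: ip_lin)
  also have "\<dots> = (\<Sum>c\<in>{1..8}. \<Sum>d\<in>{1..8}. \<Sum>a\<in>{1..8}. of_int (\<beta> a) * (cartan_inv c d * (of_int (ip (sr a) (sr c)) * of_int (ip \<beta> (sr d)))))"
    by (intro sum.cong refl) (simp add: sum_distrib_left sum_distrib_right algebra_simps)
  also have "\<dots> = (\<Sum>a\<in>{1..8}. \<Sum>c\<in>{1..8}. \<Sum>d\<in>{1..8}. of_int (\<beta> a) * (cartan_inv c d * (of_int (ip (sr a) (sr c)) * of_int (ip \<beta> (sr d)))))"
    by (rule sum_swap3[symmetric])
  also have "\<dots> = (\<Sum>a\<in>{1..8}. of_int (\<beta> a) * (\<Sum>c\<in>{1..8}. \<Sum>d\<in>{1..8}. cartan_inv c d * (of_int (ip (sr a) (sr c)) * of_int (ip \<beta> (sr d)))))"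
    by (simp add: sum_distrib_left)
  also have "\<dots> = (\<Sum>a\<in>{1..8}. of_int (\<beta> a) * of_int (ip \<beta> (sr a)))"
  proof (rule sum.cong[OF refl])
    fix a assume a: "a \<in> {1..8::nat}"
    show "of_int (\<beta> a) * (\<Sum>c\<in>{1..8}. \<Sum>d\<in>{1..8}. cartan_inv c d * (of_int (ip (sr a) (sr c)) * of_int (ip \<beta> (sr d))))
      = of_int (\<beta> a) * of_int (ip \<beta> (sr a))"
      by (simp only: KcF[OF a])
  qed
  also have "\<dots> = (\<Sum>a\<in>{1..8}. of_int (\<beta> a) * of_int (ip (sr a) \<beta>))"
    by (simp add: ip_sym[of \<beta>])
  also have "\<dots> = of_int (ip \<beta> \<beta>)" by (rule ip_lin)
  finally show ?thesis .
qed

lemma W2: "Ymode (ee \<beta>) 1 omega b' = of_int (ip \<beta> \<beta>) * ee \<beta> b'"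
proof -
  have "Ymode (ee \<beta>) 1 omega b' =
     (\<Sum>c\<in>{1..8}. \<Sum>d\<in>{1..8}. (cartan_inv c d / 2) * Ybas ({#}, \<beta>) 1 ({#(c,1), (d,1)#}, vac_lat) b')"
    unfolding omega_alt ee_def by (subst Ymode_comb2_right) (simp_all add: fin_supp_bvec Ymode_bvec_bvec)
  also have "\<dots> = (\<Sum>c\<in>{1..8}. \<Sum>d\<in>{1..8}. cartan_inv c d * (of_int (ip \<beta> (sr c)) * of_int (ip \<beta> (sr d)))) * ee \<beta> b'"
    unfolding Ybas_ee_pair ee_def sum_distrib_right by (intro sum.cong refl) (simp add: algebra_simps)
  also have "\<dots> = of_int (ip \<beta> \<beta>) * ee \<beta> b'" by (simp only: ipipH)
  finally show ?thesis .
qed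


lemma W3: "Ymode (hh x) 1 omega b' = 2 * hh x b'"
proof -
  have "Ymode (hh x) 1 omega b' = (\<Sum>a\<in>{1..8}. \<Sum>b\<in>{1..8}. of_int (x a * x b) * Ymode (bvec ({#(a,1), (b,1)#}, vac_lat)) 1 omega b')"
    unfolding hh_alt by (rule Ymode_comb2_left) (simp_all add: fin_omega)
  also have "\<dots> = (\<Sum>a\<in>{1..8}. \<Sum>b\<in>{1..8}. 2 * (of_int (x a * x b) * bvec ({#(a,1), (b,1)#}, vac_lat) b'))"
  proof (intro sum.cong refl)
    fix a b assume a: "a \<in> {1..8::nat}" and b: "b \<in> {1..8::nat}"
    show "of_int (x a * x b) * Ymode (bvec ({#(a,1), (b,1)#}, vac_lat)) 1 omega b' = 2 * (of_int (x a * x b) * bvec ({#(a,1), (b,1)#}, vac_lat) b')"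
      unfolding W1[OF a b] by simp
  qed
  also have "\<dots> = 2 * hh x b'" unfolding hh_alt by (simp add: sum_distrib_left)
  finally show ?thesis .
qed

lemma Ymode_tx: assumes "finite (supp w)"
  shows "Ymode (\<lambda>bb. hh x bb - 2 * (ee x bb + ee (neg x) bb)) N w b =
    Ymode (hh x) N w b - 2 * (Ymode (ee x) N w b + Ymode (ee (neg x)) N w b)"
proof -
  have f: "finite (supp (\<lambda>bb. ee x bb + ee (neg x) bb))" by (intro fin_supp_add fin_ee)
  have 1: "Ymode (\<lambda>bb. hh x bb + (-2) * (ee x bb + ee (neg x) bb)) N w b = Ymode (hh x) N w b + Ymode (\<lambda>bb. (-2) * (ee x bb + ee (neg x) bb)) N w b"
    by (rule Ymode_add_left[OF assms fin_hh]) (rule fin_supp_scale[OF f])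
  have 2: "Ymode (\<lambda>bb. (-2) * (ee x bb + ee (neg x) bb)) N w b = (-2) * Ymode (\<lambda>bb. ee x bb + ee (neg x) bb) N w b"
    by (rule Ymode_scale_left[OF assms f])
  have 3: "Ymode (\<lambda>bb. ee x bb + ee (neg x) bb) N w b = Ymode (ee x) N w b + Ymode (ee (neg x)) N w b"
    by (rule Ymode_add_left[OF assms fin_ee fin_ee])
  have e: "(\<lambda>bb. hh x bb - 2 * (ee x bb + ee (neg x) bb)) = (\<lambda>bb. hh x bb + (-2) * (ee x bb + ee (neg x) bb))"
    by (rule ext) simp
  show ?thesis unfolding e 1 2 3 by simp
qed

lemma W4: assumes "ip x x = 2"
  shows "Ymode (\<lambda>bb. hh x bb - 2 * (ee x bb + ee (neg x) bb)) 1 omega b' = 2 * (hh x b' - 2 * (ee x b' + ee (neg x) b'))"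
proof -
  have "ip (neg x) (neg x) = 2" using assms by (simp add: ip_negL ip_negR)
  then show ?thesis unfolding Ymode_tx[OF fin_omega] W2 W3 using assms by (simp add: algebra_simps)
qed

definition Dv :: "lat \<Rightarrow> vvec" where
  "Dv x = (\<lambda>b'. (1/2) * (\<Sum>a\<in>{1..8}. sb x a * bvec ({#(a,2)#}, vac_lat) b'))"

lemma hmode_m1_bvec: "hmode c (-1) (bvec (M, g)) = (\<lambda>b'. \<Sum>a\<in>{1..8}. c a * bvec (add_mset (a,1) M, g) b')"
  by (rule ext) (simp add: hmode_def heis_neg_bvec)

lemma hmode_m2_bvec: "hmode c (-2) (bvec (M, g)) = (\<lambda>b'. \<Sum>a\<in>{1..8}. c a * bvec (add_mset (a,2) M, g) b')"
  by (rule ext) (simp add: hmode_def heis_neg_bvec)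

lemma sbsb: "sb x a * (sb x a' * bvec (add_mset (a',1) {#(a,1)#}, vac_lat) b') = 2 * (of_int (x a * x a') * bvec ({#(a,1), (a',1)#}, vac_lat) b')"
proof -
  have "sb x a * (sb x a' * bvec (add_mset (a',1) {#(a,1)#}, vac_lat) b') =
      (complex_of_real (sqrt 2) * complex_of_real (sqrt 2)) * (of_int (x a) * of_int (x a')) * bvec ({#(a,1), (a',1)#}, vac_lat) b'"
    unfolding sb_def mm_comm[of a' a, symmetric] by (simp add: algebra_simps)
  then show ?thesis unfolding s2 by simp
qed

lemma Eminus_sb_2_vac: "Eminus (sb x) 2 (bvec ({#}, vac_lat)) b' = hh x b' + Dv x b'"
proof -
  have A: "hmode (sb x) (-1) (hmode (sb x) (-1) (bvec ({#}, vac_lat))) b' =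
     (\<Sum>a\<in>{1..8}. sb x a * (\<Sum>a'\<in>{1..8}. sb x a' * bvec (add_mset (a',1) {#(a,1)#}, vac_lat) b'))"
    unfolding hmode_m1_bvec
    by (subst hmode_sum) (auto intro: fin_supp_scale fin_supp_bvec simp: hmode_scale hmode_m1_bvec)
  also have "\<dots> = (\<Sum>a\<in>{1..8}. \<Sum>a'\<in>{1..8}. 2 * (of_int (x a * x a') * bvec ({#(a,1), (a',1)#}, vac_lat) b'))"
    unfolding sum_distrib_left by (intro sum.cong refl) (rule sbsb)
  also have "\<dots> = 2 * hh x b'" unfolding hh_alt by (simp add: sum_distrib_left)
  finally have A': "hmode (sb x) (-1) (hmode (sb x) (-1) (bvec ({#}, vac_lat))) b' = 2 * hh x b'" .
  have B: "hmode (sb x) (-2) (bvec ({#}, vac_lat)) b' = 2 * Dv x b'"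
    unfolding hmode_m2_bvec Dv_def by simp
  show ?thesis unfolding Eminus_2 A' B by simp
qed

lemma hh_neg: "hh (neg x) = hh x" by (simp add: hh_def neg_def)
lemma Dv_neg: "Dv (neg x) b' = - Dv x b'"
  by (simp add: Dv_def sb_def neg_def sum_negf[symmetric])
lemma neg_neg: "neg (neg x) = x" by (simp add: neg_def)



definition W :: "(lat \<Rightarrow> complex) \<Rightarrow> vvec" where
  "W wt = (\<lambda>bb. \<Sum>\<gamma>\<in>PhiE8. wt \<gamma> * bvec ({#}, \<gamma>) bb)"

lemma fin_W: "finite (supp (W wt))" unfolding W_def by (rule fin_comb1[OF finite_PhiE8])

definition Sx :: "(lat \<Rightarrow> complex) \<Rightarrow> lat \<Rightarrow> int \<Rightarrow> bas \<Rightarrow> complex" where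
  "Sx wt y k b' = (\<Sum>\<gamma>\<in>PhiE8. if ip y \<gamma> = k then wt \<gamma> * ee \<gamma> b' else 0)"

lemma PhiE8_E8: "\<gamma> \<in> PhiE8 \<Longrightarrow> \<gamma> \<in> E8" by (simp add: PhiE8_def)
lemma PhiE8_ip: "\<gamma> \<in> PhiE8 \<Longrightarrow> ip \<gamma> \<gamma> = 2" by (simp add: PhiE8_def)
lemma PhiE8_neg: "\<gamma> \<in> PhiE8 \<Longrightarrow> neg \<gamma> \<in> PhiE8"
  by (simp add: PhiE8_def E8_neg ip_negL ip_negR)

lemma Y_hh_W: "Ymode (hh x) 1 (W wt) b' = (\<Sum>\<gamma>\<in>PhiE8. wt \<gamma> * (2 * of_int ((ip x \<gamma>)^2) * ee \<gamma> b'))"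
proof -
  have "Ymode (hh x) 1 (W wt) b' = (\<Sum>a\<in>{1..8}. \<Sum>b\<in>{1..8}. of_int (x a * x b) * Ymode (bvec ({#(a,1), (b,1)#}, vac_lat)) 1 (W wt) b')"
    unfolding hh_alt by (rule Ymode_comb2_left) (simp_all add: fin_W)
  also have "\<dots> = (\<Sum>a\<in>{1..8}. \<Sum>b\<in>{1..8}. \<Sum>\<gamma>\<in>PhiE8. of_int (x a * x b) * (wt \<gamma> * (2 * of_int (ip (sr a) \<gamma> * ip (sr b) \<gamma>) * ee \<gamma> b')))"
  proof (intro sum.cong refl)
    fix a b
    have "Ymode (bvec ({#(a,1), (b,1)#}, vac_lat)) 1 (W wt) b' = (\<Sum>\<gamma>\<in>PhiE8. wt \<gamma> * Ymode (bvec ({#(a,1), (b,1)#}, vac_lat)) 1 (bvec ({#}, \<gamma>)) b')"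
      unfolding W_def by (rule Ymode_comb1_right) (simp_all add: fin_supp_bvec finite_PhiE8)
    also have "\<dots> = (\<Sum>\<gamma>\<in>PhiE8. wt \<gamma> * (2 * of_int (ip (sr a) \<gamma> * ip (sr b) \<gamma>) * ee \<gamma> b'))"
      unfolding Ymode_bvec_bvec Ybas_pair_ee ee_def ..
    finally show "of_int (x a * x b) * Ymode (bvec ({#(a,1), (b,1)#}, vac_lat)) 1 (W wt) b' =
      (\<Sum>\<gamma>\<in>PhiE8. of_int (x a * x b) * (wt \<gamma> * (2 * of_int (ip (sr a) \<gamma> * ip (sr b) \<gamma>) * ee \<gamma> b')))"
      by (simp add: sum_distrib_left)
  qed
  also have "\<dots> = (\<Sum>\<gamma>\<in>PhiE8. \<Sum>a\<in>{1..8}. \<Sum>b\<in>{1..8}. of_int (x a * x b) * (wt \<gamma> * (2 * of_int (ip (sr a) \<gamma> * ip (sr b) \<gamma>) * ee \<gamma> b')))"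
    by (rule sum_swap3[symmetric])
  also have "\<dots> = (\<Sum>\<gamma>\<in>PhiE8. wt \<gamma> * (2 * of_int ((ip x \<gamma>)^2) * ee \<gamma> b'))"
  proof (rule sum.cong[OF refl])
    fix \<gamma>
    have "(\<Sum>a\<in>{1..8}. \<Sum>b\<in>{1..8}. of_int (x a * x b) * (wt \<gamma> * (2 * of_int (ip (sr a) \<gamma> * ip (sr b) \<gamma>) * ee \<gamma> b')))
      = (wt \<gamma> * 2 * ee \<gamma> b') * ((\<Sum>a\<in>{1..8}. of_int (x a) * of_int (ip (sr a) \<gamma>)) * (\<Sum>b\<in>{1..8}. of_int (x b) * of_int (ip (sr b) \<gamma>)))"
      by (simp add: sum_product sum_distrib_left algebra_simps)
    also have "\<dots> = wt \<gamma> * (2 * of_int ((ip x \<gamma>)^2) * ee \<gamma> b')"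
      by (simp only: ip_lin) (simp add: power2_eq_square algebra_simps)
    finally show "(\<Sum>a\<in>{1..8}. \<Sum>b\<in>{1..8}. of_int (x a * x b) * (wt \<gamma> * (2 * of_int (ip (sr a) \<gamma> * ip (sr b) \<gamma>) * ee \<gamma> b')))
      = wt \<gamma> * (2 * of_int ((ip x \<gamma>)^2) * ee \<gamma> b')" .
  qed
  finally show ?thesis .
qed


lemma Y1_root: assumes x: "x \<in> PhiE8" and g: "\<gamma> \<in> PhiE8"
  shows "Ybas ({#}, x) 1 ({#}, \<gamma>) b' = (if ip x \<gamma> = -1 then ee (\<lambda>k. \<gamma> k + x k) b'
      else if ip x \<gamma> = -2 then hh x b' + Dv x b' else 0)"
proof -
  have lo: "-2 \<le> ip x \<gamma>" using root_ip_bounds[OF x g] by simp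
  show ?thesis
  proof (cases "ip x \<gamma> = -1")
    case True
    then show ?thesis unfolding Ybas_ee_ee by (simp add: Eminus_0 ee_def)
  next
    case False
    show ?thesis
    proof (cases "ip x \<gamma> = -2")
      case True
      then have "\<gamma> = neg x" using root_ip_bounds(4)[OF x g] by simp
      then have v: "(\<lambda>k. \<gamma> k + x k) = vac_lat" by (simp add: neg_def vac_lat_def)
      have "nat (- 1 - 1 - 2 * ip x \<gamma>) = 2" using True by simp
      then show ?thesis unfolding Ybas_ee_ee using True v by (simp add: Eminus_sb_2_vac)
    next
      case False
      then have "0 \<le> ip x \<gamma>" using lo \<open>ip x \<gamma> \<noteq> -1\<close> by simp
      then show ?thesis unfolding Ybas_ee_ee using \<open>ip x \<gamma> \<noteq> -1\<close> False by simp
    qed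
  qed
qed

lemma Y_ee_W1: assumes x: "x \<in> PhiE8"
  shows "Ymode (ee x) 1 (W wt) b' = (\<Sum>\<gamma>\<in>PhiE8. if ip x \<gamma> = -1 then wt \<gamma> * ee (\<lambda>k. \<gamma> k + x k) b' else 0)
     + wt (neg x) * (hh x b' + Dv x b')"
proof -
  have "Ymode (ee x) 1 (W wt) b' = (\<Sum>\<gamma>\<in>PhiE8. wt \<gamma> * Ymode (ee x) 1 (bvec ({#}, \<gamma>)) b')"
    unfolding W_def by (rule Ymode_comb1_right) (simp_all add: fin_ee finite_PhiE8)
  also have "\<dots> = (\<Sum>\<gamma>\<in>PhiE8. (if ip x \<gamma> = -1 then wt \<gamma> * ee (\<lambda>k. \<gamma> k + x k) b' else 0)
      + (if \<gamma> = neg x then wt \<gamma> * (hh x b' + Dv x b') else 0))"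
  proof (rule sum.cong[OF refl])
    fix \<gamma> assume g: "\<gamma> \<in> PhiE8"
    have iff: "ip x \<gamma> = -2 \<longleftrightarrow> \<gamma> = neg x"
      using root_ip_bounds(4)[OF x g] PhiE8_ip[OF x] by (auto simp: ip_negR)
    show "wt \<gamma> * Ymode (ee x) 1 (bvec ({#}, \<gamma>)) b' = (if ip x \<gamma> = -1 then wt \<gamma> * ee (\<lambda>k. \<gamma> k + x k) b' else 0)
      + (if \<gamma> = neg x then wt \<gamma> * (hh x b' + Dv x b') else 0)"
      unfolding ee_def Ymode_bvec_bvec Y1_root[OF x g, unfolded ee_def] iff[symmetric] by auto
  qed
  also have "\<dots> = (\<Sum>\<gamma>\<in>PhiE8. if ip x \<gamma> = -1 then wt \<gamma> * ee (\<lambda>k. \<gamma> k + x k) b' else 0)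
     + wt (neg x) * (hh x b' + Dv x b')"
    using PhiE8_neg[OF x] by (simp add: sum.distrib finite_PhiE8)
  finally show ?thesis .
qed

lemma reindex_R: assumes x: "x \<in> PhiE8"
  and inv: "\<And>\<gamma>. \<gamma> \<in> PhiE8 \<Longrightarrow> (\<lambda>k. \<gamma> k + x k) \<in> PhiE8 \<Longrightarrow> wt (\<lambda>k. \<gamma> k + x k) = wt \<gamma>"
  shows "(\<Sum>\<gamma>\<in>PhiE8. if ip x \<gamma> = -1 then wt \<gamma> * ee (\<lambda>k. \<gamma> k + x k) b' else 0) = Sx wt x 1 b'"
proof -
  let ?A = "{\<gamma> \<in> PhiE8. ip x \<gamma> = -1}"
  let ?B = "{\<delta> \<in> PhiE8. ip x \<delta> = 1}"
  let ?h = "\<lambda>\<gamma>::lat. (\<lambda>k. \<gamma> k + x k)"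
  have xe: "x \<in> E8" "ip x x = 2" using x by (auto simp: PhiE8_def)
  have bij: "bij_betw ?h ?A ?B"
  proof (rule bij_betw_imageI)
    show "inj_on ?h ?A" by (auto simp: inj_on_def fun_eq_iff)
    show "?h ` ?A = ?B"
    proof
      show "?h ` ?A \<subseteq> ?B"
      proof
        fix d assume "d \<in> ?h ` ?A"
        then obtain \<gamma> where g: "\<gamma> \<in> PhiE8" "ip x \<gamma> = -1" and d: "d = ?h \<gamma>" by auto
        have ge: "\<gamma> \<in> E8" "ip \<gamma> \<gamma> = 2" using g by (auto simp: PhiE8_def)
        have "ip d d = 2" unfolding d using ge xe g(2) by (simp add: ip_addL ip_addR ip_sym[of \<gamma> x])
        moreover have "ip x d = 1" unfolding d using g(2) xe by (simp add: ip_addR)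
        moreover have "d \<in> E8" unfolding d using ge xe by (simp add: E8_add)
        ultimately show "d \<in> ?B" by (simp add: PhiE8_def)
      qed
      show "?B \<subseteq> ?h ` ?A"
      proof
        fix d assume dB: "d \<in> ?B"
        let ?g = "\<lambda>k. d k - x k"
        have de: "d \<in> E8" "ip d d = 2" "ip x d = 1" using dB by (auto simp: PhiE8_def)
        have "ip ?g ?g = 2" using de xe by (simp add: ip_subL ip_subR ip_sym[of d x])
        moreover have "ip x ?g = -1" using de xe by (simp add: ip_subR)
        moreover have "?g \<in> E8" using de xe by (simp add: E8_sub)
        ultimately have gA: "?g \<in> ?A" by (simp add: PhiE8_def)
        show "d \<in> ?h ` ?A" by (rule image_eqI[where x = "?g"]) (use gA in simp_all)
      qed
    qed
  qed
  have "(\<Sum>\<gamma>\<in>PhiE8. if ip x \<gamma> = -1 then wt \<gamma> * ee (?h \<gamma>) b' else 0) = (\<Sum>\<gamma>\<in>?A. wt \<gamma> * ee (?h \<gamma>) b')"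
    by (simp add: sum.inter_filter finite_PhiE8)
  also have "\<dots> = (\<Sum>\<gamma>\<in>?A. wt (?h \<gamma>) * ee (?h \<gamma>) b')"
  proof (rule sum.cong[OF refl])
    fix \<gamma> assume "\<gamma> \<in> ?A"
    then have "?h \<gamma> \<in> ?B" using bij by (auto simp: bij_betw_def)
    then show "wt \<gamma> * ee (?h \<gamma>) b' = wt (?h \<gamma>) * ee (?h \<gamma>) b'" using inv \<open>\<gamma> \<in> ?A\<close> by simp
  qed
  also have "\<dots> = (\<Sum>\<delta>\<in>?B. wt \<delta> * ee \<delta> b')"
    by (rule sum.reindex_bij_betw[OF bij])
  also have "\<dots> = Sx wt x 1 b'"
    by (simp add: Sx_def sum.inter_filter finite_PhiE8)
  finally show ?thesis .
qed


lemma Sx_2: assumes x: "x \<in> PhiE8" shows "Sx wt x 2 b' = wt x * ee x b'"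
proof -
  have "Sx wt x 2 b' = (\<Sum>\<gamma>\<in>PhiE8. if \<gamma> = x then wt \<gamma> * ee \<gamma> b' else 0)"
    unfolding Sx_def
  proof (rule sum.cong[OF refl])
    fix \<gamma> assume g: "\<gamma> \<in> PhiE8"
    have "ip x \<gamma> = 2 \<longleftrightarrow> \<gamma> = x" using root_ip_bounds(3)[OF x g] PhiE8_ip[OF x] by auto
    then show "(if ip x \<gamma> = 2 then wt \<gamma> * ee \<gamma> b' else 0) = (if \<gamma> = x then wt \<gamma> * ee \<gamma> b' else 0)" by simp
  qed
  also have "\<dots> = wt x * ee x b'" using x by (simp add: finite_PhiE8)
  finally show ?thesis .
qed

lemma Sx_m2: assumes x: "x \<in> PhiE8" shows "Sx wt x (-2) b' = wt (neg x) * ee (neg x) b'"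
proof -
  have "Sx wt x (-2) b' = (\<Sum>\<gamma>\<in>PhiE8. if \<gamma> = neg x then wt \<gamma> * ee \<gamma> b' else 0)"
    unfolding Sx_def
  proof (rule sum.cong[OF refl])
    fix \<gamma> assume g: "\<gamma> \<in> PhiE8"
    have "ip x \<gamma> = -2 \<longleftrightarrow> \<gamma> = neg x" using root_ip_bounds(4)[OF x g] PhiE8_ip[OF x] by (auto simp: ip_negR)
    then show "(if ip x \<gamma> = -2 then wt \<gamma> * ee \<gamma> b' else 0) = (if \<gamma> = neg x then wt \<gamma> * ee \<gamma> b' else 0)" by simp
  qed
  also have "\<dots> = wt (neg x) * ee (neg x) b'" using PhiE8_neg[OF x] by (simp add: finite_PhiE8)
  finally show ?thesis .
qed

lemma Sx_negx: "Sx wt (neg x) 1 b' = Sx wt x (-1) b'"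
  unfolding Sx_def by (rule sum.cong[OF refl]) (auto simp: ip_negL)

lemma sq_decomp: fixes k :: int assumes "-2 \<le> k" "k \<le> 2"
  shows "w * (2 * of_int (k^2) * e) = 2 * (if k = 1 then w * e else 0) + 2 * (if k = -1 then w * e else 0)
     + 8 * (if k = 2 then w * e else 0) + 8 * (if k = -2 then w * e else (0::complex))"
proof -
  have "k = -2 \<or> k = -1 \<or> k = 0 \<or> k = 1 \<or> k = 2" using assms by auto
  then show ?thesis by (elim disjE) (simp_all add: algebra_simps)
qed

lemma Y_hh_W2: assumes x: "x \<in> PhiE8"
  shows "Ymode (hh x) 1 (W wt) b' = 2 * Sx wt x 1 b' + 2 * Sx wt x (-1) b' + 8 * (wt x * ee x b') + 8 * (wt (neg x) * ee (neg x) b')"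
proof -
  have "Ymode (hh x) 1 (W wt) b' = (\<Sum>\<gamma>\<in>PhiE8. 2 * (if ip x \<gamma> = 1 then wt \<gamma> * ee \<gamma> b' else 0) + 2 * (if ip x \<gamma> = -1 then wt \<gamma> * ee \<gamma> b' else 0)
     + 8 * (if ip x \<gamma> = 2 then wt \<gamma> * ee \<gamma> b' else 0) + 8 * (if ip x \<gamma> = -2 then wt \<gamma> * ee \<gamma> b' else 0))"
    unfolding Y_hh_W
  proof (rule sum.cong[OF refl])
    fix \<gamma> assume g: "\<gamma> \<in> PhiE8"
    show "wt \<gamma> * (2 * of_int ((ip x \<gamma>)^2) * ee \<gamma> b') = 2 * (if ip x \<gamma> = 1 then wt \<gamma> * ee \<gamma> b' else 0) + 2 * (if ip x \<gamma> = -1 then wt \<gamma> * ee \<gamma> b' else 0)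
     + 8 * (if ip x \<gamma> = 2 then wt \<gamma> * ee \<gamma> b' else 0) + 8 * (if ip x \<gamma> = -2 then wt \<gamma> * ee \<gamma> b' else 0)"
      by (rule sq_decomp) (use root_ip_bounds[OF x g] in auto)
  qed
  also have "\<dots> = 2 * Sx wt x 1 b' + 2 * Sx wt x (-1) b' + 8 * Sx wt x 2 b' + 8 * Sx wt x (-2) b'"
    unfolding Sx_def by (simp add: sum.distrib sum_distrib_left)
  finally show ?thesis unfolding Sx_2[OF x] Sx_m2[OF x] .
qed

lemma PhiT: assumes x: "x \<in> PhiE8"
  and inv: "\<And>\<gamma> y. \<gamma> \<in> PhiE8 \<Longrightarrow> (\<lambda>k. \<gamma> k + y k) \<in> PhiE8 \<Longrightarrow> y = x \<or> y = neg x \<Longrightarrow> wt (\<lambda>k. \<gamma> k + y k) = wt \<gamma>"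
  shows "Ymode (\<lambda>bb. hh x bb - 2 * (ee x bb + ee (neg x) bb)) 1 (W wt) b' =
    8 * wt x * ee x b' + 8 * wt (neg x) * ee (neg x) b' - 2 * (wt x + wt (neg x)) * hh x b' - 2 * (wt (neg x) - wt x) * Dv x b'"
proof -
  have nx: "neg x \<in> PhiE8" by (rule PhiE8_neg[OF x])
  have R1: "(\<Sum>\<gamma>\<in>PhiE8. if ip x \<gamma> = -1 then wt \<gamma> * ee (\<lambda>k. \<gamma> k + x k) b' else 0) = Sx wt x 1 b'"
    by (rule reindex_R[OF x]) (rule inv, auto)
  have R2: "(\<Sum>\<gamma>\<in>PhiE8. if ip (neg x) \<gamma> = -1 then wt \<gamma> * ee (\<lambda>k. \<gamma> k + neg x k) b' else 0) = Sx wt (neg x) 1 b'"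
    by (rule reindex_R[OF nx]) (rule inv, auto)
  show ?thesis
    unfolding Ymode_tx[OF fin_W] Y_hh_W2[OF x] Y_ee_W1[OF x] Y_ee_W1[OF nx] R1 R2 Sx_negx neg_neg hh_neg
    by (simp add: Dv_neg algebra_simps)
qed



lemma fin_tx: "finite (supp (\<lambda>bb. hh x bb - 2 * (ee x bb + ee (neg x) bb)))"
proof -
  have "supp (\<lambda>bb. hh x bb - 2 * (ee x bb + ee (neg x) bb)) \<subseteq> supp (hh x) \<union> supp (ee x) \<union> supp (ee (neg x))"
    by (auto simp: supp_def)
  then show ?thesis using fin_hh fin_ee finite_subset by blast
qed

lemma Ymode_svec: assumes "finite (supp w)" "\<forall>x\<in>PhiPos C. Ymode (\<lambda>bb. hh x bb - 2 * (ee x bb + ee (neg x) bb)) 1 w b = 0"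
  shows "Ymode (svec C) 1 w b = 0"
proof (cases "finite (PhiPos C)")
  case False
  then have "svec C = (\<lambda>_. 0)" by (simp add: svec_def)
  then show ?thesis by (simp add: Ymode_zero_left)
next
  case True
  have fs: "finite (supp (\<lambda>bb. \<Sum>x\<in>PhiPos C. hh x bb - 2 * (ee x bb + ee (neg x) bb)))"
    by (rule fin_supp_sum[OF True]) (intro ballI fin_tx)
  have "Ymode (svec C) 1 w b = (1 / (2 * (of_nat (coxnum C) + 2))) *
      Ymode (\<lambda>bb. \<Sum>x\<in>PhiPos C. hh x bb - 2 * (ee x bb + ee (neg x) bb)) 1 w b"
    unfolding svec_def by (rule Ymode_scale_left[OF assms(1) fs])
  also have "Ymode (\<lambda>bb. \<Sum>x\<in>PhiPos C. hh x bb - 2 * (ee x bb + ee (neg x) bb)) 1 w b =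
     (\<Sum>x\<in>PhiPos C. Ymode (\<lambda>bb. hh x bb - 2 * (ee x bb + ee (neg x) bb)) 1 w b)"
    by (rule Ymode_sum_left[OF assms(1) True]) (intro ballI fin_tx)
  also have "\<dots> = 0" using assms(2) by simp
  finally show ?thesis by simp
qed

lemma comps_sub: "C \<in> comps i \<Longrightarrow> C \<subseteq> {0..8} - {i}"
  by (auto simp: comps_def Dnodes_def)

lemma PhiPos_root: assumes i: "i \<le> 8" and C: "C \<in> comps i" and x: "x \<in> PhiPos C"
  shows "x \<in> PhiE8" "x \<in> Lsub i"
proof -
  have Cs: "C \<subseteq> {0..8} - {i}" by (rule comps_sub[OF C])
  obtain c where xc: "x = lcomb c C" and xx: "ip x x = 2"
    using x by (auto simp: PhiPos_def PhiR_def Rlat_def)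
  have E: "x \<in> E8" unfolding xc by (rule lcomb_E8) (use Cs in auto)
  then show "x \<in> PhiE8" using xx by (simp add: PhiE8_def)
  have "int (nn i) dvd x i"
  proof (cases "i = 0")
    case True then show ?thesis by (simp add: nn0)
  next
    case False
    have "\<And>j. j \<in> C \<Longrightarrow> int (nn i) dvd c j * sr j i"
    proof -
      fix j assume j: "j \<in> C"
      then have ji: "j \<noteq> i" using Cs by auto
      show "int (nn i) dvd c j * sr j i"
      proof (cases "j = 0")
        case True
        then have "sr j i = - int (nn i)" using nn_hr[of i] False i by (simp add: sr_zero)
        then show ?thesis by simp
      next
        case False
        then have "sr j i = 0" using ji by (simp add: sr_pos)
        then show ?thesis by simp
      qed
    qed
    then have "int (nn i) dvd (\<Sum>j\<in>C. c j * sr j i)" by (rule dvd_sum)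
    then show ?thesis by (simp add: xc lcomb_def)
  qed
  then show "x \<in> Lsub i" using E Lsub_char[OF i] by simp
qed

lemma Lsub_neg: assumes i: "i \<le> 8" and x: "x \<in> Lsub i" shows "neg x \<in> Lsub i"
proof -
  have h: "x \<in> E8" "int (nn i) dvd x i" using x Lsub_char[OF i] by auto
  have "neg x \<in> E8" by (rule E8_neg[OF h(1)])
  moreover have "int (nn i) dvd neg x i" using h(2) by (simp add: neg_def)
  ultimately show ?thesis using Lsub_char[OF i] by blast
qed

lemma coset_shift: assumes i: "i \<le> 8" and g: "g \<in> E8" and y: "y \<in> Lsub i"
  shows "coset_idx i (\<lambda>k. g k + y k) = coset_idx i g"
proof -
  have ye: "y \<in> E8" "int (nn i) dvd y i" using y Lsub_char[OF i] by auto
  have "(g i + y i) mod int (nn i) = g i mod int (nn i)" using ye(2) by (simp add: mod_add_right_eq[symmetric] dvd_imp_mod_0)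
  then show ?thesis using coset_idx_eq[OF i g] coset_idx_eq[OF i E8_add[OF g ye(1)]] by simp
qed

lemma coset_L: assumes i: "i \<le> 8" and y: "y \<in> Lsub i" shows "coset_idx i y = 0"
proof -
  have ye: "y \<in> E8" "int (nn i) dvd y i" using y Lsub_char[OF i] by auto
  then show ?thesis using coset_idx_eq[OF i ye(1)] by (simp add: dvd_imp_mod_0)
qed

lemma Hset_shift: assumes i: "i \<le> 8" and g: "g \<in> PhiE8" and gy: "(\<lambda>k. g k + y k) \<in> PhiE8" and y: "y \<in> Lsub i"
  shows "(\<lambda>k. g k + y k) \<in> Hset i j \<longleftrightarrow> g \<in> Hset i j"
proof -
  have ye: "y \<in> E8" "int (nn i) dvd y i" using y Lsub_char[OF i] by auto
  have ge: "g \<in> E8" "ip g g = 2" using g by (auto simp: PhiE8_def)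
  have gye: "ip (\<lambda>k. g k + y k) (\<lambda>k. g k + y k) = 2" using gy by (auto simp: PhiE8_def)
  have s: "sr i \<in> E8" by (rule sr_E8[OF i])
  have e1: "(\<lambda>k. g k + y k - int j * sr i k) \<in> E8" using ge ye s by (simp add: E8_iff)
  have e2: "(\<lambda>k. g k - int j * sr i k) \<in> E8" using ge ye s by (simp add: E8_iff)
  have "int (nn i) dvd g i + y i - int j * sr i i \<longleftrightarrow> int (nn i) dvd g i - int j * sr i i"
  proof -
    have e: "g i + y i - int j * sr i i = (g i - int j * sr i i) + y i" by simp
    show ?thesis unfolding e by (rule dvd_add_left_iff[OF ye(2)])
  qed
  moreover have "(\<lambda>k. g k + y k - int j * sr i k) \<in> Lsub i \<longleftrightarrow> int (nn i) dvd g i + y i - int j * sr i i"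
    using e1 Lsub_char[OF i, of "\<lambda>k. g k + y k - int j * sr i k"] by simp
  moreover have "(\<lambda>k. g k - int j * sr i k) \<in> Lsub i \<longleftrightarrow> int (nn i) dvd g i - int j * sr i i"
    using e2 Lsub_char[OF i, of "\<lambda>k. g k - int j * sr i k"] by simp
  ultimately show ?thesis unfolding Hset_def using gye ge(2) by simp
qed

lemma Hset_sub: assumes i: "i \<le> 8" shows "Hset i j \<subseteq> PhiE8"
proof
  fix g assume "g \<in> Hset i j"
  then have h: "(\<lambda>k. g k - int j * sr i k) \<in> Lsub i" "ip g g = 2" by (auto simp: Hset_def)
  then have "(\<lambda>k. g k - int j * sr i k) \<in> E8" using Lsub_char[OF i] by simp
  then have "g \<in> E8" using sr_E8[OF i] by (simp add: E8_iff)
  then show "g \<in> PhiE8" using h by (simp add: PhiE8_def)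
qed

lemma L_notin_Hset: assumes i: "i \<le> 8" and j: "j \<in> {1..<nn i}" and y: "y \<in> Lsub i"
  shows "y \<notin> Hset i j"
proof
  assume "y \<in> Hset i j"
  then have h: "(\<lambda>k. y k - int j * sr i k) \<in> Lsub i" by (simp add: Hset_def)
  have i0: "i \<noteq> 0"
  proof
    assume "i = 0" then show False using j by (simp add: nn0)
  qed
  then have s: "sr i i = 1" by (simp add: sr_pos)
  have d1: "int (nn i) dvd y i - int j" using h s Lsub_char[OF i] by simp
  have d2: "int (nn i) dvd y i" using y Lsub_char[OF i] by simp
  have "int (nn i) dvd int j" using dvd_diff[OF d2 d1] by simp
  then have "nn i dvd j" by simp
  moreover have "0 < j" "j < nn i" using j by auto
  ultimately show False using nat_dvd_not_less by blast
qed



lemma Xvec_W: assumes i: "i \<le> 8" shows "Xvec i j = W (\<lambda>\<gamma>. if \<gamma> \<in> Hset i j then 1 else 0)"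
proof (rule ext)
  fix bb
  have "W (\<lambda>\<gamma>. if \<gamma> \<in> Hset i j then 1 else 0) bb = (\<Sum>\<gamma>\<in>PhiE8. if \<gamma> \<in> Hset i j then ee \<gamma> bb else 0)"
    unfolding W_def ee_def by (rule sum.cong) auto
  also have "\<dots> = (\<Sum>\<gamma>\<in>{\<gamma> \<in> PhiE8. \<gamma> \<in> Hset i j}. ee \<gamma> bb)"
    by (simp add: sum.inter_filter finite_PhiE8)
  also have "{\<gamma> \<in> PhiE8. \<gamma> \<in> Hset i j} = Hset i j" using Hset_sub[OF i] by auto
  finally show "Xvec i j bb = W (\<lambda>\<gamma>. if \<gamma> \<in> Hset i j then 1 else 0) bb" by (simp add: Xvec_def)
qed

lemma ehat_W: "ehat = (\<lambda>bb. (1/16) * omega bb + W (\<lambda>_. 1/32) bb)"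
  unfolding ehat_def W_def ee_def by (rule ext) (simp add: sum_distrib_left sum_divide_distrib)

lemma vac_E8: "vac_lat \<in> E8" by (simp add: E8_iff vac_lat_def)

lemma coset_vac: "i \<le> 8 \<Longrightarrow> coset_idx i vac_lat = 0"
  using coset_idx_eq[OF _ vac_E8] by (simp add: vac_lat_def)

lemma omega_nz: "omega bb \<noteq> 0 \<Longrightarrow> snd bb = vac_lat"
proof -
  assume nz: "omega bb \<noteq> 0"
  then have "(\<Sum>c\<in>{1..8}. \<Sum>d\<in>{1..8}. (cartan_inv c d / 2) * bvec ({#(c,1), (d,1)#}, vac_lat) bb) \<noteq> 0"
    by (simp add: omega_alt)
  then obtain c where "(\<Sum>d\<in>{1..8}. (cartan_inv c d / 2) * bvec ({#(c,1), (d,1)#}, vac_lat) bb) \<noteq> 0"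
    by (rule sum.not_neutral_contains_not_neutral)
  then obtain d where "(cartan_inv c d / 2) * bvec ({#(c,1), (d,1)#}, vac_lat) bb \<noteq> 0"
    by (rule sum.not_neutral_contains_not_neutral)
  then show ?thesis by (auto simp: bvec_def split: if_splits)
qed

lemma sigma_W: assumes i: "i \<le> 8"
  shows "sigma i ehat = (\<lambda>bb. (1/16) * omega bb + W (\<lambda>\<gamma>. xi i ^ coset_idx i \<gamma> / 32) bb)"
proof (rule ext)
  fix bb
  have o: "xi i ^ coset_idx i (snd bb) * omega bb = omega bb"
  proof (cases "omega bb = 0")
    case False
    then have "snd bb = vac_lat" by (rule omega_nz)
    then show ?thesis using coset_vac[OF i] by simp
  qed simp
  have w: "xi i ^ coset_idx i (snd bb) * W (\<lambda>_. 1/32) bb = W (\<lambda>\<gamma>. xi i ^ coset_idx i \<gamma> / 32) bb"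
    unfolding W_def sum_distrib_left
  proof (rule sum.cong[OF refl])
    fix \<gamma>
    show "xi i ^ coset_idx i (snd bb) * (1 / 32 * bvec ({#}, \<gamma>) bb) = xi i ^ coset_idx i \<gamma> / 32 * bvec ({#}, \<gamma>) bb"
      by (cases "bb = ({#}, \<gamma>)") (auto simp: bvec_def)
  qed
  show "sigma i ehat bb = (1/16) * omega bb + W (\<lambda>\<gamma>. xi i ^ coset_idx i \<gamma> / 32) bb"
    unfolding sigma_def ehat_W using o w by (simp add: algebra_simps)
qed

lemma supp_W: "supp (W wt) \<subseteq> validbas"
proof
  fix bb assume "bb \<in> supp (W wt)"
  then have "(\<Sum>\<gamma>\<in>PhiE8. wt \<gamma> * bvec ({#}, \<gamma>) bb) \<noteq> 0" by (simp add: supp_def W_def)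
  then obtain \<gamma> where g: "\<gamma> \<in> PhiE8" "wt \<gamma> * bvec ({#}, \<gamma>) bb \<noteq> 0" by (rule sum.not_neutral_contains_not_neutral)
  then have "bb = ({#}, \<gamma>)" by (auto simp: bvec_def split: if_splits)
  then show "bb \<in> validbas" using g(1) by (simp add: validbas_def PhiE8_def)
qed

lemma supp_omega: "supp omega \<subseteq> validbas"
proof
  fix bb assume "bb \<in> supp omega"
  then have "(\<Sum>c\<in>{1..8}. \<Sum>d\<in>{1..8}. (cartan_inv c d / 2) * bvec ({#(c,1), (d,1)#}, vac_lat) bb) \<noteq> 0"
    by (simp add: omega_alt supp_def)
  then obtain c where c: "c \<in> {1..8}" "(\<Sum>d\<in>{1..8}. (cartan_inv c d / 2) * bvec ({#(c,1), (d,1)#}, vac_lat) bb) \<noteq> 0"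
    by (rule sum.not_neutral_contains_not_neutral)
  obtain d where d: "d \<in> {1..8}" "(cartan_inv c d / 2) * bvec ({#(c,1), (d,1)#}, vac_lat) bb \<noteq> 0"
    using c(2) by (rule sum.not_neutral_contains_not_neutral)
  then have "bb = ({#(c,1), (d,1)#}, vac_lat)" by (auto simp: bvec_def split: if_splits)
  then show "bb \<in> validbas" using c(1) d(1) vac_E8 by (auto simp: validbas_def)
qed

lemma VE8_W: "W wt \<in> VE8" using fin_W supp_W by (simp add: VE8_def)

lemma VE8_lin: assumes "finite (supp f)" "supp f \<subseteq> validbas" "finite (supp g)" "supp g \<subseteq> validbas"
  shows "(\<lambda>bb. c * f bb + g bb) \<in> VE8"
proof -
  have s: "supp (\<lambda>bb. c * f bb + g bb) \<subseteq> supp f \<union> supp g" by (auto simp: supp_def)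
  show ?thesis unfolding VE8_def using s assms finite_subset[OF s] by auto
qed

lemma U_intro: assumes "v \<in> VE8"
  and "\<And>C x b. C \<in> comps i \<Longrightarrow> x \<in> PhiPos C \<Longrightarrow> Ymode (\<lambda>bb. hh x bb - 2 * (ee x bb + ee (neg x) bb)) 1 v b = 0"
  shows "v \<in> Uspace i"
proof -
  have fv: "finite (supp v)" using assms(1) by (simp add: VE8_def)
  have "\<forall>C\<in>comps i. Ymode (svec C) 1 v = (\<lambda>_. 0)"
  proof
    fix C assume C: "C \<in> comps i"
    show "Ymode (svec C) 1 v = (\<lambda>_. 0)"
      by (rule ext, rule Ymode_svec[OF fv]) (use assms(2) C in auto)
  qed
  then show ?thesis using assms(1) by (simp add: Uspace_def)
qed

lemma tx_half: assumes "ip x x = 2" "x \<in> PhiE8" "wt x = 1/32" "wt (neg x) = 1/32"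
  and inv: "\<And>\<gamma> y. \<gamma> \<in> PhiE8 \<Longrightarrow> (\<lambda>k. \<gamma> k + y k) \<in> PhiE8 \<Longrightarrow> y = x \<or> y = neg x \<Longrightarrow> wt (\<lambda>k. \<gamma> k + y k) = wt \<gamma>"
  shows "Ymode (\<lambda>bb. hh x bb - 2 * (ee x bb + ee (neg x) bb)) 1 (\<lambda>bb. (1/16) * omega bb + W wt bb) b = 0"
proof -
  let ?t = "\<lambda>bb. hh x bb - 2 * (ee x bb + ee (neg x) bb)"
  have "Ymode ?t 1 (\<lambda>bb. (1/16) * omega bb + W wt bb) b = Ymode ?t 1 (\<lambda>bb. (1/16) * omega bb) b + Ymode ?t 1 (W wt) b"
    by (rule Ymode_add_right[OF fin_tx fin_supp_scale[OF fin_omega] fin_W])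
  also have "Ymode ?t 1 (\<lambda>bb. (1/16) * omega bb) b = (1/16) * Ymode ?t 1 omega b"
    by (rule Ymode_scale_right[OF fin_tx fin_omega])
  also have "Ymode ?t 1 omega b = 2 * (hh x b - 2 * (ee x b + ee (neg x) b))" by (rule W4[OF assms(1)])
  also have "Ymode ?t 1 (W wt) b = 8 * wt x * ee x b + 8 * wt (neg x) * ee (neg x) b - 2 * (wt x + wt (neg x)) * hh x b - 2 * (wt (neg x) - wt x) * Dv x b"
    by (rule PhiT[OF assms(2) inv])
  finally show ?thesis using assms(3,4) by (simp add: algebra_simps)
qed


theorem mainTheorem5:
  fixes i :: nat
  assumes "i \<le> 8"
  shows "(\<forall>j\<in>{1..<nn i}. Xvec i j \<in> Uspace i) \<and> ehat \<in> Uspace i \<and> sigma i ehat \<in> Uspace i"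
proof (intro conjI ballI)
  have i: "i \<le> 8" by (rule assms)
  fix j assume j: "j \<in> {1..<nn i}"
  let ?wt = "\<lambda>\<gamma>. if \<gamma> \<in> Hset i j then 1 else (0::complex)"
  show "Xvec i j \<in> Uspace i" unfolding Xvec_W[OF i]
  proof (rule U_intro[OF VE8_W])
    fix C x b assume C: "C \<in> comps i" and x: "x \<in> PhiPos C"
    have xr: "x \<in> PhiE8" and xL: "x \<in> Lsub i" using PhiPos_root[OF i C x] by auto
    have nL: "neg x \<in> Lsub i" by (rule Lsub_neg[OF i xL])
    have "Ymode (\<lambda>bb. hh x bb - 2 * (ee x bb + ee (neg x) bb)) 1 (W ?wt) b =
      8 * ?wt x * ee x b + 8 * ?wt (neg x) * ee (neg x) b - 2 * (?wt x + ?wt (neg x)) * hh x b - 2 * (?wt (neg x) - ?wt x) * Dv x b"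
    proof (rule PhiT[OF xr])
      fix \<gamma> y assume g: "\<gamma> \<in> PhiE8" and gy: "(\<lambda>k. \<gamma> k + y k) \<in> PhiE8" and y: "y = x \<or> y = neg x"
      have "y \<in> Lsub i" using y xL nL by auto
      then show "?wt (\<lambda>k. \<gamma> k + y k) = ?wt \<gamma>" using Hset_shift[OF i g gy] by simp
    qed
    also have "\<dots> = 0" using L_notin_Hset[OF i j xL] L_notin_Hset[OF i j nL] by simp
    finally show "Ymode (\<lambda>bb. hh x bb - 2 * (ee x bb + ee (neg x) bb)) 1 (W ?wt) b = 0" .
  qed
next
  have i: "i \<le> 8" by (rule assms)
  show "ehat \<in> Uspace i" unfolding ehat_W
  proof (rule U_intro[OF VE8_lin[OF fin_omega supp_omega fin_W supp_W]])
    fix C x b assume C: "C \<in> comps i" and x: "x \<in> PhiPos C"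
    have xr: "x \<in> PhiE8" using PhiPos_root[OF i C x] by auto
    show "Ymode (\<lambda>bb. hh x bb - 2 * (ee x bb + ee (neg x) bb)) 1 (\<lambda>bb. 1 / 16 * omega bb + W (\<lambda>_. 1 / 32) bb) b = 0"
      by (rule tx_half) (use xr in \<open>simp_all add: PhiE8_ip\<close>)
  qed
next
  have i: "i \<le> 8" by (rule assms)
  let ?wt = "\<lambda>\<gamma>. xi i ^ coset_idx i \<gamma> / 32"
  show "sigma i ehat \<in> Uspace i" unfolding sigma_W[OF i]
  proof (rule U_intro[OF VE8_lin[OF fin_omega supp_omega fin_W supp_W]])
    fix C x b assume C: "C \<in> comps i" and x: "x \<in> PhiPos C"
    have xr: "x \<in> PhiE8" and xL: "x \<in> Lsub i" using PhiPos_root[OF i C x] by auto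
    have nL: "neg x \<in> Lsub i" by (rule Lsub_neg[OF i xL])
    show "Ymode (\<lambda>bb. hh x bb - 2 * (ee x bb + ee (neg x) bb)) 1 (\<lambda>bb. 1 / 16 * omega bb + W ?wt bb) b = 0"
    proof (rule tx_half)
      show "ip x x = 2" using xr by (simp add: PhiE8_ip)
      show "x \<in> PhiE8" by (rule xr)
      show "?wt x = 1/32" using coset_L[OF i xL] by simp
      show "?wt (neg x) = 1/32" using coset_L[OF i nL] by simp
      fix \<gamma> y assume g: "\<gamma> \<in> PhiE8" and gy: "(\<lambda>k. \<gamma> k + y k) \<in> PhiE8" and y: "y = x \<or> y = neg x"
      have "y \<in> Lsub i" using y xL nL by auto
      then show "?wt (\<lambda>k. \<gamma> k + y k) = ?wt \<gamma>" using coset_shift[OF i PhiE8_E8[OF g]] by simp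
    qed
  qed
qed


end
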